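(* Let $\{\mathcal X^\varepsilon:\varepsilon\ge 0\}$ be a Markov perturbation of a synchronized DRN $\mathcal X^0$. Then there is $\varepsilon_1>0$ such that for every $0\le\varepsilon<\varepsilon_1$ there exists an invariant distribution $p_\varepsilon:\Omega\to\Sigma_1^+$ of $\mathcal X^\varepsilon$ (i.e. $P_{\mathcal X^\varepsilon}(1,\omega)p_\varepsilon(\omega)=p_\varepsilon(\theta\omega)$ for $\mu$-a.e. $\omega$) with the following properties: (i) $p_\varepsilon$ is pull-back attracting: for every $q\in\Sigma_1^+$ and $\mu$-a.e. $\omega$, $\lim_{n\to\infty}|P_{\mathcal X^\varepsilon}(n,\theta^{-n}\omega)q-p_\varepsilon(\omega)|=0$; (ii) $p_\varepsilon$ is forward attracting: for every $q\in\Sigma_1^+$ and $\mu$-a.e. $\omega$, $\lim_{n\to\infty}|P_{\mathcal X^\varepsilon}(n,\omega)q-p_\varepsilon(\theta^n\omega)|=0$; (iii) $p_\varepsilon$ is continuous at $\varepsilon=0$: there is an $\mathcal F$-measurable $J:\Omega\to\mathbb K$ such that for $\mu$-a.e. $\omega$, $\lim_{\varepsilon\to0}p_\varepsilon(\omega)=e_{J(\omega)}=p_0(\omega)$. Moreover, if $\mathcal X^0$ is uniformly synchronized, then the convergence in (iii) is uniform on a set of full $\mu$-measure.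
   Context: Let $k\ge2$, $S=\{s_1,\dots,s_k\}$, $\mathbb K=\{1,\dots,k\}$, $e_1,\dots,e_k$ the canonical basis of $\mathbb R^k$. $|\cdot|$ denotes the $\ell^1$-norm on $\mathbb R^k$ and the induced operator norm on $\mathbb R^{k\times k}$ (max absolute column sum). For $a\in\mathbb R$, $\Sigma_a=\{v\in\mathbb R^k:\sum_jv_j=a\}$ and $\Sigma_1^+=\{v\in\Sigma_1:v_j\ge0\ \forall j\}$. $\Theta=(\Omega,\mathcal F,\mu,\theta)$ is an invertible metric dynamical system: $(\Omega,\mathcal F,\mu)$ is a standard probability space and $\theta:\Omega\to\Omega$ is invertible, ergodic and $\mu$-preserving. A Markov random network (MRN) over $\Theta$ is a stochastic process $\mathcal X=(X_n)_{n\in\mathbb N_0}$ with state space $S\times\Omega$ such that (MRN1) $\omega\mapsto\mathbb P\{X_n=(s_i,\theta^n\omega)\mid X_0=(s_j,\omega)\}$ is $\mathcal F$-measurable for all $n,i,j$; (MRN2) $\sum_{i}\mathbb P\{X_n=(s_i,\theta^{n-m}\omega)\mid X_m=(s_j,\omega)\}=1$ for all $j$, all $n\ge m$, and $\mu$-a.e. $\omega$; (MRN3) $\mathbb P\{X_{n+1}=(s_{i_{n+1}},\theta^{n+1}\omega)\mid X_n=(s_{i_n},\theta^n\omega)\}=\mathbb P\{X_{n+1}=(s_{i_{n+1}},\theta^{n+1}\omega)\mid X_0=(s_{i_0},\omega),\dots,X_n=(s_{i_n},\theta^n\omega)\}$ for all $n$, all indices, $\mu$-a.e. $\omega$. Its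 transition cocycle is $P_{\mathcal X}(n,\omega)=(p_{i,j}(n,\omega))_{i,j\in\mathbb K}$, $p_{i,j}(n,\omega)=\mathbb P\{X_n=(s_i,\theta^n\omega)\mid X_0=(s_j,\omega)\}$; for $\mu$-a.e. $\omega$ it is column-stochastic, $P_{\mathcal X}(0,\omega)=I_k$, and $P_{\mathcal X}(m+n,\omega)=P_{\mathcal X}(m,\theta^n\omega)P_{\mathcal X}(n,\omega)$. A deterministic random network (DRN) is an MRN $\mathcal X^0$ whose transition cocycle $P^0:=P_{\mathcal X^0}$ has all entries in $\{0,1\}$ for all $n$ and $\mu$-a.e. $\omega$; it defines maps $T_{\mathcal X^0}(n,\omega):S\to S$ by $T_{\mathcal X^0}(n,\omega)(s_j)=s_i$ iff $P^0(n,\omega)_{i,j}=1$. $\mathcal X^0$ is synchronized if there is an $\mathcal F$-measurable $N:\Omega\to\mathbb N$ such that for $\mu$-a.e. $\omega$ and all $i,j$, $T_{\mathcal X^0}(n,\omega)(s_i)=T_{\mathcal X^0}(n,\omega)(s_j)$ for all $n\ge N(\omega)$; it is uniformly synchronized if such $N$ can be chosen $\mu$-a.e. constant. A Markov perturbation of a DRN $\mathcal X^0$ is a family $\{\mathcal X^\varepsilon:\varepsilon\ge0\}$ of MRNs over $\Theta$ (with $\mathcal X^\varepsilon$ at $\varepsilon=0$ being $\mathcal X^0$) such that $|P_{\mathcal X^\varepsilon}(1,\omega)-P^0(1,\omega)|\le\varepsilon$ for all $\varepsilon\ge0$ and $\mu$-a.e. $\omega$. An invariant distribution of an MRN $\mathcal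 X$ is an $\mathcal F$-measurable $p:\Omega\to\Sigma_1^+$ with $P_{\mathcal X}(n,\omega)p(\omega)=p(\theta^n\omega)$ for all $n\in\mathbb N_0$ and $\mu$-a.e. $\omega$. *)

theory Defs
  imports "HOL-Probability.Probability"
begin

text \<open>States s_1..s_k are represented by a finite index type 'k (k = CARD('k)).
  Vectors in R^k are real^'k, k x k matrices are real^'k^'k; e_j = axis j 1.\<close>

definition l1norm :: "real^'k::finite \<Rightarrow> real" where
  "l1norm v = (\<Sum>i\<in>UNIV. \<bar>v $ i\<bar>)"

text \<open>Induced operator norm of the l1 norm: maximal absolute column sum.\<close>
definition opnorm1 :: "real^'k::finite^'k \<Rightarrow> real" where
  "opnorm1 A = Max (range (\<lambda>j. \<Sum>i\<in>UNIV. \<bar>A $ i $ j\<bar>))"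

definition simplex1 :: "(real^'k::finite) set" where
  "simplex1 = {v. (\<forall>i. 0 \<le> v $ i) \<and> (\<Sum>i\<in>UNIV. v $ i) = 1}"

definition column_stochastic :: "real^'k::finite^'k \<Rightarrow> bool" where
  "column_stochastic A \<longleftrightarrow> (\<forall>i j. 0 \<le> A $ i $ j) \<and> (\<forall>j. (\<Sum>i\<in>UNIV. A $ i $ j) = 1)"

definition standard_prob_space :: "'a::polish_space measure \<Rightarrow> bool" where
  "standard_prob_space M \<longleftrightarrow> prob_space M \<and>
     (\<exists>N. sets N = sets borel \<and> (M = N \<or> M = completion N))"

definition invertible_ergodic_mds :: "'a::polish_space measure \<Rightarrow> ('a \<Rightarrow> 'a) \<Rightarrow> bool" where
  "invertible_ergodic_mds M \<theta> \<longleftrightarrow>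
     standard_prob_space M \<and>
     bij_betw \<theta> (space M) (space M) \<and>
     \<theta> \<in> M \<rightarrow>\<^sub>M M \<and> inv_into (space M) \<theta> \<in> M \<rightarrow>\<^sub>M M \<and>
     distr M M \<theta> = M \<and>
     (\<forall>A\<in>sets M. \<theta> -` A \<inter> space M = A \<longrightarrow> measure M A = 0 \<or> measure M A = 1)"

text \<open>A Markov random network over (M, \<theta>) is represented by its transition cocycle
  P n \<omega> (entry (i,j) = probability of going from s_j at \<omega> to s_i at \<theta>^n \<omega> in n steps).\<close>
definition MRN_cocycle :: "'a measure \<Rightarrow> ('a \<Rightarrow> 'a) \<Rightarrow> (nat \<Rightarrow> 'a \<Rightarrow> real^'k::finite^'k) \<Rightarrow> bool" where
  "MRN_cocycle M \<theta> P \<longleftrightarrow>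
     (\<forall>n i j. (\<lambda>\<omega>. P n \<omega> $ i $ j) \<in> borel_measurable M) \<and>
     (AE \<omega> in M. \<forall>n. column_stochastic (P n \<omega>)) \<and>
     (AE \<omega> in M. P 0 \<omega> = mat 1) \<and>
     (AE \<omega> in M. \<forall>m n. P (m + n) \<omega> = P m ((\<theta> ^^ n) \<omega>) ** P n \<omega>)"

definition DRN_cocycle :: "'a measure \<Rightarrow> ('a \<Rightarrow> 'a) \<Rightarrow> (nat \<Rightarrow> 'a \<Rightarrow> real^'k::finite^'k) \<Rightarrow> bool" where
  "DRN_cocycle M \<theta> P \<longleftrightarrow> MRN_cocycle M \<theta> P \<and>
     (AE \<omega> in M. \<forall>n i j. P n \<omega> $ i $ j \<in> {0, 1})"

definition drn_map :: "(nat \<Rightarrow> 'a \<Rightarrow> real^'k::finite^'k) \<Rightarrow> nat \<Rightarrow> 'a \<Rightarrow> 'k \<Rightarrow> 'k" where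
  "drn_map P n \<omega> j = (THE i. P n \<omega> $ i $ j = 1)"

definition synchronized :: "'a measure \<Rightarrow> ('a \<Rightarrow> 'a) \<Rightarrow> (nat \<Rightarrow> 'a \<Rightarrow> real^'k::finite^'k) \<Rightarrow> bool" where
  "synchronized M \<theta> P \<longleftrightarrow> DRN_cocycle M \<theta> P \<and>
     (\<exists>N::'a \<Rightarrow> nat. N \<in> M \<rightarrow>\<^sub>M count_space UNIV \<and> (\<forall>\<omega>\<in>space M. 1 \<le> N \<omega>) \<and>
        (AE \<omega> in M. \<forall>i j. \<forall>n\<ge>N \<omega>. drn_map P n \<omega> i = drn_map P n \<omega> j))"

definition uniformly_synchronized :: "'a measure \<Rightarrow> ('a \<Rightarrow> 'a) \<Rightarrow> (nat \<Rightarrow> 'a \<Rightarrow> real^'k::finite^'k) \<Rightarrow> bool" where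
  "uniformly_synchronized M \<theta> P \<longleftrightarrow> DRN_cocycle M \<theta> P \<and>
     (\<exists>N::'a \<Rightarrow> nat. N \<in> M \<rightarrow>\<^sub>M count_space UNIV \<and> (\<forall>\<omega>\<in>space M. 1 \<le> N \<omega>) \<and>
        (\<exists>c. AE \<omega> in M. N \<omega> = c) \<and>
        (AE \<omega> in M. \<forall>i j. \<forall>n\<ge>N \<omega>. drn_map P n \<omega> i = drn_map P n \<omega> j))"

text \<open>Markov perturbation: X \<epsilon> is the cocycle of the MRN X^\<epsilon> (for \<epsilon> \<ge> 0), X 0 is the DRN.\<close>
definition markov_perturbation :: "'a measure \<Rightarrow> ('a \<Rightarrow> 'a) \<Rightarrow> (real \<Rightarrow> nat \<Rightarrow> 'a \<Rightarrow> real^'k::finite^'k) \<Rightarrow> bool" where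
  "markov_perturbation M \<theta> X \<longleftrightarrow> DRN_cocycle M \<theta> (X 0) \<and>
     (\<forall>\<epsilon>\<ge>0. MRN_cocycle M \<theta> (X \<epsilon>) \<and>
        (AE \<omega> in M. opnorm1 (X \<epsilon> 1 \<omega> - X 0 1 \<omega>) \<le> \<epsilon>))"

definition invariant_distribution :: "'a measure \<Rightarrow> ('a \<Rightarrow> 'a) \<Rightarrow> (nat \<Rightarrow> 'a \<Rightarrow> real^'k::finite^'k) \<Rightarrow> ('a \<Rightarrow> real^'k) \<Rightarrow> bool" where
  "invariant_distribution M \<theta> P p \<longleftrightarrow> p \<in> borel_measurable M \<and> (\<forall>\<omega>\<in>space M. p \<omega> \<in> simplex1) \<and>
     (AE \<omega> in M. \<forall>n. P n \<omega> *v p \<omega> = p ((\<theta> ^^ n) \<omega>))"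

end

theory Submission
  imports Defs
begin


lemma vec_measurable:
  fixes f :: "'a \<Rightarrow> real^'k::finite"
  assumes "\<And>i. (\<lambda>x. f x $ i) \<in> borel_measurable M"
  shows "f \<in> borel_measurable M"
proof (subst borel_measurable_euclidean_space, intro ballI)
  fix b :: "real^'k" assume "b \<in> Basis"
  then obtain i where "b = axis i 1" by (auto simp: Basis_vec_def)
  then show "(\<lambda>x. f x \<bullet> b) \<in> borel_measurable M" using assms[of i] by (simp add: inner_axis)
qed

lemma l1norm_triangle: "l1norm (v + w) \<le> l1norm v + l1norm (w::real^'k::finite)"
  unfolding l1norm_def by (subst sum.distrib[symmetric], rule sum_mono) (simp add: abs_triangle_ineq)

lemma l1norm_nonneg: "0 \<le> l1norm v"
  unfolding l1norm_def by (simp add: sum_nonneg)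

lemma l1norm_minus: "l1norm (v - w) = l1norm (w - v)"
  unfolding l1norm_def by (simp add: abs_minus_commute)

lemma l1norm_diff_triangle: "l1norm (u - w) \<le> l1norm (u - v) + l1norm (v - (w::real^'k::finite))"
  using l1norm_triangle[of "u - v" "v - w"] by simp

lemma norm_le_l1norm: "norm v \<le> l1norm v"
  unfolding l1norm_def by (rule norm_le_l1_cart)

lemma l1norm_le_norm: "l1norm (v::real^'k::finite) \<le> real CARD('k) * norm v"
proof -
  have "(\<Sum>i\<in>UNIV. \<bar>v$i\<bar>) \<le> (\<Sum>i\<in>(UNIV::'k set). norm v)"
    by (rule sum_mono) (rule component_le_norm_cart)
  then show ?thesis by (simp add: l1norm_def)
qed

lemma l1norm_tendsto_iff:
  "((\<lambda>n. l1norm (f n - (L::real^'k::finite))) \<longlonglongrightarrow> 0) \<longleftrightarrow> f \<longlonglongrightarrow> L"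
proof
  assume a: "(\<lambda>n. l1norm (f n - L)) \<longlonglongrightarrow> 0"
  have "(\<lambda>n. norm (f n - L)) \<longlonglongrightarrow> 0"
    by (rule Lim_null_comparison[OF _ a]) (simp add: norm_le_l1norm)
  then have "(\<lambda>n. f n - L) \<longlonglongrightarrow> 0" by (rule tendsto_norm_zero_cancel)
  then show "f \<longlonglongrightarrow> L" by (rule LIM_zero_cancel)
next
  assume "f \<longlonglongrightarrow> L"
  then have "(\<lambda>n. f n - L) \<longlonglongrightarrow> 0" by (rule LIM_zero)
  then have "(\<lambda>n. norm (f n - L)) \<longlonglongrightarrow> 0" by (rule tendsto_norm_zero)
  then have g: "(\<lambda>n. real CARD('k) * norm (f n - L)) \<longlonglongrightarrow> 0" by (rule tendsto_mult_right_zero)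
  have e: "\<forall>\<^sub>F n in sequentially. norm (l1norm (f n - L)) \<le> real CARD('k) * norm (f n - L)"
    by (intro always_eventually allI) (simp add: l1norm_nonneg l1norm_le_norm)
  show "(\<lambda>n. l1norm (f n - L)) \<longlonglongrightarrow> 0" by (rule Lim_null_comparison[OF e g])
qed

lemma l1norm_mat_vec: "l1norm (A *v v) \<le> opnorm1 A * l1norm (v::real^'k::finite)"
proof -
  have col: "(\<Sum>i\<in>UNIV. \<bar>A $ i $ j\<bar>) \<le> opnorm1 A" for j
    unfolding opnorm1_def by (rule Max_ge) auto
  have "l1norm (A *v v) = (\<Sum>i\<in>UNIV. \<bar>\<Sum>j\<in>UNIV. A $ i $ j * v $ j\<bar>)"
    by (simp add: l1norm_def matrix_vector_mult_def)
  also have "\<dots> \<le> (\<Sum>i\<in>UNIV. \<Sum>j\<in>UNIV. \<bar>A $ i $ j\<bar> * \<bar>v $ j\<bar>)"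
    by (intro sum_mono, rule order_trans[OF sum_abs]) (simp add: abs_mult)
  also have "\<dots> = (\<Sum>j\<in>UNIV. (\<Sum>i\<in>UNIV. \<bar>A $ i $ j\<bar>) * \<bar>v $ j\<bar>)"
    by (subst sum.swap) (simp add: sum_distrib_right)
  also have "\<dots> \<le> (\<Sum>j\<in>UNIV. opnorm1 A * \<bar>v $ j\<bar>)"
    by (intro sum_mono mult_right_mono col) auto
  also have "\<dots> = opnorm1 A * l1norm v" by (simp add: l1norm_def sum_distrib_left)
  finally show ?thesis .
qed

lemma stoch_opnorm: "column_stochastic A \<Longrightarrow> opnorm1 A \<le> 1"
  unfolding opnorm1_def column_stochastic_def by (auto intro!: Max.boundedI)

lemma stoch_nonexp: "column_stochastic A \<Longrightarrow> l1norm (A *v v) \<le> l1norm v"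
proof -
  assume "column_stochastic A"
  then have "opnorm1 A * l1norm v \<le> 1 * l1norm v"
    by (intro mult_right_mono stoch_opnorm l1norm_nonneg)
  then show ?thesis using l1norm_mat_vec[of A v] by simp
qed

lemma stoch_sum: "column_stochastic A \<Longrightarrow> (\<Sum>i\<in>UNIV. (A *v v) $ i) = (\<Sum>i\<in>UNIV. v $ i)"
proof -
  assume a: "column_stochastic A"
  have "(\<Sum>i\<in>UNIV. (A *v v) $ i) = (\<Sum>i\<in>UNIV. \<Sum>j\<in>UNIV. A $ i $ j * v $ j)"
    by (simp add: matrix_vector_mult_def)
  also have "\<dots> = (\<Sum>j\<in>UNIV. \<Sum>i\<in>UNIV. A $ i $ j * v $ j)" by (rule sum.swap)
  also have "\<dots> = (\<Sum>j\<in>UNIV. (\<Sum>i\<in>UNIV. A $ i $ j) * v $ j)" by (simp only: sum_distrib_right)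
  also have "\<dots> = (\<Sum>j\<in>UNIV. v $ j)" using a by (simp add: column_stochastic_def)
  finally show ?thesis .
qed

lemma stoch_simplex: "column_stochastic A \<Longrightarrow> v \<in> simplex1 \<Longrightarrow> A *v v \<in> simplex1"
proof -
  assume a: "column_stochastic A" and v: "v \<in> simplex1"
  have "0 \<le> (A *v v) $ i" for i
    using a v unfolding simplex1_def column_stochastic_def matrix_vector_mult_def
    by (simp add: sum_nonneg)
  then show ?thesis using stoch_sum[OF a, of v] v by (simp add: simplex1_def)
qed

lemma stoch_mult: "column_stochastic A \<Longrightarrow> column_stochastic B \<Longrightarrow> column_stochastic (A ** B)"
proof -
  assume a: "column_stochastic A" and b: "column_stochastic B"
  have "(\<Sum>i\<in>UNIV. (A ** B) $ i $ j) = 1" for j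
  proof -
    have "(\<Sum>i\<in>UNIV. (A ** B) $ i $ j) = (\<Sum>i\<in>UNIV. \<Sum>k\<in>UNIV. A $ i $ k * B $ k $ j)"
      by (simp add: matrix_matrix_mult_def)
    also have "\<dots> = (\<Sum>k\<in>UNIV. \<Sum>i\<in>UNIV. A $ i $ k * B $ k $ j)" by (rule sum.swap)
    also have "\<dots> = (\<Sum>k\<in>UNIV. (\<Sum>i\<in>UNIV. A $ i $ k) * B $ k $ j)" by (simp only: sum_distrib_right)
    also have "\<dots> = 1" using a b by (simp add: column_stochastic_def)
    finally show ?thesis .
  qed
  moreover have "0 \<le> (A ** B) $ i $ j" for i j
    using a b unfolding column_stochastic_def matrix_matrix_mult_def by (simp add: sum_nonneg)
  ultimately show ?thesis by (simp add: column_stochastic_def)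
qed


definition mclose :: "real^'k::finite^'k \<Rightarrow> real^'k^'k \<Rightarrow> real \<Rightarrow> bool" where
  "mclose A B c \<longleftrightarrow> (\<forall>v::real^'k. l1norm ((A - B) *v v) \<le> c * l1norm v)"

lemma mclose_opnorm: "opnorm1 (A - B) \<le> c \<Longrightarrow> mclose A B c"
  unfolding mclose_def
proof
  fix v :: "real^'a" assume "opnorm1 (A - B) \<le> c"
  then have "opnorm1 (A - B) * l1norm v \<le> c * l1norm v" by (intro mult_right_mono l1norm_nonneg)
  then show "l1norm ((A - B) *v v) \<le> c * l1norm v" using l1norm_mat_vec[of "A - B" v] by linarith
qed

lemma mclose_refl: "mclose A A 0"
  unfolding mclose_def l1norm_def by simp

lemma mclose_mult:
  assumes A: "column_stochastic A" and B': "column_stochastic B'" and a: "0 \<le> a"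
    and cA: "mclose A A' a" and cB: "mclose B B' b"
  shows "mclose (A ** B) (A' ** B') (a + b)"
  unfolding mclose_def
proof
  fix v :: "real^'a"
  have eq: "(A ** B - A' ** B') *v v = A *v ((B - B') *v v) + (A - A') *v (B' *v v)"
    by (simp add: matrix_vector_mult_diff_rdistrib matrix_vector_mult_diff_distrib matrix_vector_mul_assoc[symmetric])
  have 1: "l1norm (A *v ((B - B') *v v)) \<le> b * l1norm v"
    using stoch_nonexp[OF A, of "(B - B') *v v"] cB unfolding mclose_def by (meson order_trans)
  have "l1norm ((A - A') *v (B' *v v)) \<le> a * l1norm (B' *v v)" using cA unfolding mclose_def by blast
  also have "\<dots> \<le> a * l1norm v" using stoch_nonexp[OF B'] a by (simp add: mult_left_mono)
  finally have 2: "l1norm ((A - A') *v (B' *v v)) \<le> a * l1norm v" .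
  show "l1norm ((A ** B - A' ** B') *v v) \<le> (a + b) * l1norm v"
    unfolding eq using l1norm_triangle[of "A *v ((B - B') *v v)" "(A - A') *v (B' *v v)"] 1 2
      distrib_right[of a b "l1norm v"] by linarith
qed

lemma l1norm_simplex: "q \<in> simplex1 \<Longrightarrow> l1norm q = 1"
  unfolding simplex1_def l1norm_def by simp

lemma l1norm_simplex_diff: "q \<in> simplex1 \<Longrightarrow> q' \<in> simplex1 \<Longrightarrow> l1norm (q - q') \<le> 2"
  using l1norm_triangle[of q "- q'"] l1norm_simplex[of q] l1norm_simplex[of q']
  by (simp add: l1norm_def)

lemma sum_simplex_diff: "q \<in> simplex1 \<Longrightarrow> q' \<in> simplex1 \<Longrightarrow> (\<Sum>i\<in>UNIV. (q - q') $ i) = 0"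
  unfolding simplex1_def by (simp add: sum_subtractf)

lemma axis_simplex: "axis i 1 \<in> simplex1"
  unfolding simplex1_def by (simp add: axis_def)

lemma drn_unique:
  assumes A: "column_stochastic A" and z: "\<forall>i j. A $ i $ j \<in> {0, 1}"
  shows "\<exists>!i. A $ i $ j = 1"
proof -
  have ex: "\<exists>i. A $ i $ j = 1"
  proof (rule ccontr)
    assume "\<not> ?thesis"
    then have "\<forall>i. A $ i $ j = 0" using z by blast
    moreover have "(\<Sum>i\<in>UNIV. A $ i $ j) = 1" using A column_stochastic_def by blast
    ultimately show False by simp
  qed
  moreover have "i = i'" if "A $ i $ j = 1" "A $ i' $ j = 1" for i i'
  proof (rule ccontr)
    assume ne: "i \<noteq> i'"
    have "(\<Sum>l\<in>{i, i'}. A $ l $ j) \<le> (\<Sum>l\<in>UNIV. A $ l $ j)"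
      using A by (intro sum_mono2) (auto simp: column_stochastic_def)
    moreover have "(\<Sum>l\<in>{i, i'}. A $ l $ j) = A $ i $ j + A $ i' $ j" using ne by simp
    moreover have "(\<Sum>l\<in>UNIV. A $ l $ j) = 1" using A column_stochastic_def by blast
    ultimately show False using that by linarith
  qed
  ultimately show ?thesis by blast
qed

lemma drn_entry:
  assumes A: "column_stochastic A" and z: "\<forall>i j. A $ i $ j \<in> {0, 1}"
  shows "A $ i $ j = (if i = (THE i. A $ i $ j = 1) then 1 else 0)"
proof -
  from drn_unique[OF A z, of j] obtain c where c: "A $ c $ j = 1" "\<And>i. A $ i $ j = 1 \<Longrightarrow> i = c"
    by blast
  then have th: "(THE i. A $ i $ j = 1) = c" by blast
  show ?thesis
  proof (cases "i = c")
    case True then show ?thesis using c(1) th by simp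
  next
    case False
    then have "A $ i $ j \<noteq> 1" using c(2) by blast
    moreover have "A $ i $ j \<in> {0, 1}" using z by blast
    ultimately show ?thesis using False th by simp
  qed
qed

lemma drn_col_axis:
  assumes A: "column_stochastic A" and z: "\<forall>i j. A $ i $ j \<in> {0, 1}"
  shows "A *v axis j 1 = axis (THE i. A $ i $ j = 1) 1"
proof -
  have "(A *v axis j 1) $ i = axis (THE i. A $ i $ j = 1) 1 $ i" for i
  proof -
    have "(A *v axis j 1) $ i = A $ i $ j"
      by (simp add: matrix_vector_mult_basis column_def)
    then show ?thesis using drn_entry[OF A z, of i j] by (simp add: axis_def)
  qed
  then show ?thesis by (simp add: vec_eq_iff)
qed

lemma drn_const:
  assumes A: "column_stochastic A" and z: "\<forall>i j. A $ i $ j \<in> {0, 1}"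
    and sy: "\<forall>j. (THE i. A $ i $ j = 1) = c"
  shows "A *v v = (\<Sum>j\<in>UNIV. v $ j) *\<^sub>R axis c 1"
proof -
  have "(A *v v) $ i = ((\<Sum>j\<in>UNIV. v $ j) *\<^sub>R axis c 1) $ i" for i
  proof -
    have e: "A $ i $ j = (if i = c then 1 else 0)" for j using drn_entry[OF A z, of i j] sy by simp
    have "(A *v v) $ i = (\<Sum>j\<in>UNIV. (if i = c then 1 else 0) * v $ j)"
      by (simp only: matrix_vector_mult_def vec_lambda_beta e)
    then show ?thesis by (cases "i = c") (simp_all add: axis_def)
  qed
  then show ?thesis by (simp add: vec_eq_iff)
qed


definition zs :: "real^'k::finite \<Rightarrow> bool" where
  "zs v \<longleftrightarrow> (\<Sum>i\<in>UNIV. v $ i) = 0"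

definition contr :: "real^'k::finite^'k \<Rightarrow> real \<Rightarrow> bool" where
  "contr A b \<longleftrightarrow> (\<forall>v::real^'k. zs v \<longrightarrow> l1norm (A *v v) \<le> b * l1norm v)"

lemma contr_mono: "contr A b \<Longrightarrow> b \<le> b' \<Longrightarrow> contr A b'"
  unfolding contr_def
proof (intro allI impI)
  fix v :: "real^'a" assume "\<forall>v. zs v \<longrightarrow> l1norm (A *v v) \<le> b * l1norm v" "b \<le> b'" "zs v"
  then have "l1norm (A *v v) \<le> b * l1norm v" "b * l1norm v \<le> b' * l1norm v"
    by (auto intro: mult_right_mono l1norm_nonneg)
  then show "l1norm (A *v v) \<le> b' * l1norm v" by linarith
qed

lemma zs_stoch: "column_stochastic A \<Longrightarrow> zs v \<Longrightarrow> zs (A *v v)"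
  unfolding zs_def using stoch_sum by metis

lemma zs_simplex_diff: "q \<in> simplex1 \<Longrightarrow> q' \<in> simplex1 \<Longrightarrow> zs (q - q')"
  unfolding zs_def by (rule sum_simplex_diff)

lemma contr_stoch: "column_stochastic A \<Longrightarrow> contr A 1"
proof -
  assume a: "column_stochastic A"
  show ?thesis unfolding contr_def
  proof (intro allI impI)
    fix v :: "real^'a" show "l1norm (A *v v) \<le> 1 * l1norm v" using stoch_nonexp[OF a, of v] by simp
  qed
qed

lemma contract_seq:
  fixes Q :: "nat \<Rightarrow> real^'k::finite^'k" and L :: nat
  assumes base: "\<And>n. contr (Q n) 1"
    and blk: "\<And>m. \<exists>t\<ge>m. \<forall>n\<ge>t+L. \<forall>b\<ge>0. contr (Q t) b \<longrightarrow> contr (Q n) (b/2)"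
  shows "\<exists>N. \<forall>n\<ge>N. contr (Q n) ((1/2)^j)"
proof (induction j)
  case 0 then show ?case using base by auto
next
  case (Suc j)
  then obtain N where N: "\<And>n. n \<ge> N \<Longrightarrow> contr (Q n) ((1/2)^j)" by blast
  from blk[of N] obtain t where t: "t \<ge> N" "\<forall>n\<ge>t+L. \<forall>b\<ge>0. contr (Q t) b \<longrightarrow> contr (Q n) (b/2)"
    by blast
  have "\<forall>n\<ge>t+L. contr (Q n) ((1/2)^Suc j)"
  proof (intro allI impI)
    fix n assume "n \<ge> t + L"
    moreover have "(0::real) \<le> (1/2)^j" by simp
    ultimately have "contr (Q n) ((1/2)^j / 2)" using t N[of t] by blast
    then show "contr (Q n) ((1/2)^Suc j)" by simp
  qed
  then show ?case by blast
qed

lemma contr_small: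
  fixes Q :: "nat \<Rightarrow> real^'k::finite^'k"
  assumes "\<And>j. \<exists>N. \<forall>n\<ge>N. contr (Q n) ((1/2)^j)" and "e > 0"
  shows "\<exists>N. \<forall>n\<ge>N. contr (Q n) e"
proof -
  obtain j where j: "(1/2::real)^j < e" using real_arch_pow_inv[OF \<open>e > 0\<close>, of "1/2"] by auto
  obtain N where "\<forall>n\<ge>N. contr (Q n) ((1/2)^j)" using assms(1) by blast
  then show ?thesis using j contr_mono[of _ "(1/2)^j" e] by auto
qed

lemma simplex_lim:
  assumes f: "\<And>n. f n \<in> simplex1" and lim: "f \<longlonglongrightarrow> p"
  shows "p \<in> simplex1"
proof -
  have c: "(\<lambda>n. f n $ i) \<longlonglongrightarrow> p $ i" for i using lim by (rule tendsto_vec_nth)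
  have "0 \<le> p $ i" for i
    by (rule LIMSEQ_le_const[OF c]) (use f in \<open>auto simp: simplex1_def\<close>)
  moreover have "(\<lambda>n. \<Sum>i\<in>UNIV. f n $ i) \<longlonglongrightarrow> (\<Sum>i\<in>UNIV. p $ i)"
    by (intro tendsto_sum c)
  moreover have "(\<lambda>n. \<Sum>i\<in>UNIV. f n $ i) = (\<lambda>n. 1)" using f by (simp add: simplex1_def)
  ultimately have "(\<Sum>i\<in>UNIV. p $ i) = 1" using LIMSEQ_unique tendsto_const by metis
  then show ?thesis using \<open>\<And>i. 0 \<le> p $ i\<close> by (simp add: simplex1_def)
qed

lemma contr_bound:
  assumes "contr A (e/4)" "q \<in> simplex1" "q' \<in> simplex1" "e > 0"
  shows "l1norm (A *v q - A *v q') < e"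
proof -
  have "l1norm (A *v (q - q')) \<le> e/4 * l1norm (q - q')"
    using assms zs_simplex_diff unfolding contr_def by blast
  also have "\<dots> \<le> e/4 * 2" using l1norm_simplex_diff[OF assms(2,3)] assms(4) by simp
  finally show ?thesis using assms(4) by (simp add: matrix_vector_mult_diff_distrib)
qed

lemma tendsto_l1_zeroI:
  assumes "\<And>e. e > 0 \<Longrightarrow> \<exists>N. \<forall>n\<ge>N. l1norm (f n) < e"
  shows "(\<lambda>n. l1norm (f n)) \<longlonglongrightarrow> 0"
proof (rule LIMSEQ_I)
  fix r :: real assume "r > 0"
  then obtain N where "\<forall>n\<ge>N. l1norm (f n) < r" using assms by blast
  then show "\<exists>N. \<forall>n\<ge>N. norm (l1norm (f n) - 0) < r" by (auto simp: abs_of_nonneg[OF l1norm_nonneg])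
qed

lemma pullback_lim:
  fixes Q :: "nat \<Rightarrow> real^'k::finite^'k"
  assumes stoch: "\<And>n. column_stochastic (Q n)"
    and split: "\<And>n m. \<exists>R. column_stochastic R \<and> Q (n + m) = Q n ** R"
    and con: "\<And>e. e > 0 \<Longrightarrow> \<exists>N. \<forall>n\<ge>N. contr (Q n) e"
  shows "\<exists>p\<in>simplex1. \<forall>q\<in>simplex1. (\<lambda>n. l1norm (Q n *v q - p)) \<longlonglongrightarrow> 0"
proof -
  define e0 :: "real^'k" where "e0 = axis undefined 1"
  have e0: "e0 \<in> simplex1" unfolding e0_def by (rule axis_simplex)
  have step: "l1norm (Q b *v e0 - Q a *v e0) < e" if "contr (Q a) (e/4)" "a \<le> b" "e > 0" for a b e
  proof -
    obtain R where R: "column_stochastic R" "Q (a + (b - a)) = Q a ** R" using split by blast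
    have "Q b *v e0 = Q a *v (R *v e0)" using R \<open>a \<le> b\<close> by (simp add: matrix_vector_mul_assoc)
    moreover have "R *v e0 \<in> simplex1" using R(1) e0 by (rule stoch_simplex)
    ultimately show ?thesis using contr_bound[OF that(1) _ e0 that(3)] by simp
  qed
  have "Cauchy (\<lambda>n. Q n *v e0)"
  proof (rule CauchyI)
    fix e :: real assume "e > 0"
    obtain N where N: "\<forall>n\<ge>N. contr (Q n) (e/4)" using con[of "e/4"] \<open>e > 0\<close> by auto
    have "norm (Q m *v e0 - Q n *v e0) < e" if "m \<ge> N" "n \<ge> N" for m n
    proof (cases "n \<le> m")
      case True
      then have "l1norm (Q m *v e0 - Q n *v e0) < e" using step[of n e m] N that \<open>e > 0\<close> by auto
      then show ?thesis using norm_le_l1norm[of "Q m *v e0 - Q n *v e0"] by linarith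
    next
      case False
      then have "l1norm (Q n *v e0 - Q m *v e0) < e" using step[of m e n] N that \<open>e > 0\<close> by auto
      then have "norm (Q n *v e0 - Q m *v e0) < e" using norm_le_l1norm[of "Q n *v e0 - Q m *v e0"] by linarith
      then show ?thesis by (simp add: norm_minus_commute)
    qed
    then show "\<exists>M. \<forall>m\<ge>M. \<forall>n\<ge>M. norm (Q m *v e0 - Q n *v e0) < e" by blast
  qed
  then obtain p where p: "(\<lambda>n. Q n *v e0) \<longlonglongrightarrow> p"
    unfolding Cauchy_convergent_iff convergent_def by blast
  have ps: "p \<in> simplex1" using stoch_simplex[OF stoch e0] p by (rule simplex_lim)
  have "(\<lambda>n. l1norm (Q n *v q - p)) \<longlonglongrightarrow> 0" if q: "q \<in> simplex1" for q
  proof -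
    have a: "(\<lambda>n. l1norm (Q n *v q - Q n *v e0)) \<longlonglongrightarrow> 0"
    proof (rule tendsto_l1_zeroI)
      fix e :: real assume "e > 0"
      then obtain N where N: "\<forall>n\<ge>N. contr (Q n) (e/4)" using con[of "e/4"] by auto
      then show "\<exists>N. \<forall>n\<ge>N. l1norm (Q n *v q - Q n *v e0) < e"
        using contr_bound[OF _ q e0 \<open>e > 0\<close>] by blast
    qed
    have b: "(\<lambda>n. l1norm (Q n *v e0 - p)) \<longlonglongrightarrow> 0" using l1norm_tendsto_iff[of "\<lambda>n. Q n *v e0" p] p by simp
    have "(\<lambda>n. l1norm (Q n *v q - Q n *v e0) + l1norm (Q n *v e0 - p)) \<longlonglongrightarrow> 0 + 0"
      by (rule tendsto_add[OF a b])
    then have g: "(\<lambda>n. l1norm (Q n *v q - Q n *v e0) + l1norm (Q n *v e0 - p)) \<longlonglongrightarrow> 0" by simp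
    have ev: "\<forall>\<^sub>F n in sequentially. norm (l1norm (Q n *v q - p)) \<le> l1norm (Q n *v q - Q n *v e0) + l1norm (Q n *v e0 - p)"
      by (intro always_eventually allI) (simp add: abs_of_nonneg[OF l1norm_nonneg] l1norm_diff_triangle)
    show ?thesis by (rule Lim_null_comparison[OF ev g])
  qed
  then show ?thesis using ps by blast
qed

lemma forward_lim:
  fixes Q :: "nat \<Rightarrow> real^'k::finite^'k"
  assumes con: "\<And>e. e > 0 \<Longrightarrow> \<exists>N. \<forall>n\<ge>N. contr (Q n) e"
    and inv: "\<And>n. Q n *v p = p' n" and p: "p \<in> simplex1" and q: "q \<in> simplex1"
  shows "(\<lambda>n. l1norm (Q n *v q - p' n)) \<longlonglongrightarrow> 0"
proof (rule tendsto_l1_zeroI)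
  fix e :: real assume "e > 0"
  then obtain N where N: "\<forall>n\<ge>N. contr (Q n) (e/4)" using con[of "e/4"] by auto
  have "l1norm (Q n *v q - p' n) < e" if "n \<ge> N" for n
    using contr_bound[OF _ q p \<open>e > 0\<close>, of "Q n"] inv[of n] N that by simp
  then show "\<exists>N. \<forall>n\<ge>N. l1norm (Q n *v q - p' n) < e" by blast
qed


lemma AE_shift:
  assumes f: "f \<in> M \<rightarrow>\<^sub>M M" and d: "distr M M f = M" and ae: "AE x in M. P x"
  shows "AE x in M. P (f x)"
proof -
  from ae obtain N where N: "{x\<in>space M. \<not> P x} \<subseteq> N" "emeasure M N = 0" "N \<in> sets M"
    by (rule AE_E)
  have s: "f -` N \<inter> space M \<in> sets M" using f N(3) by (rule measurable_sets)
  have "emeasure M (f -` N \<inter> space M) = emeasure (distr M M f) N"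
    using emeasure_distr[OF f N(3)] by simp
  then have e: "emeasure M (f -` N \<inter> space M) = 0" using d N(2) by simp
  have sub: "{x\<in>space M. \<not> P (f x)} \<subseteq> f -` N \<inter> space M"
    using N(1) measurable_space[OF f] by blast
  show ?thesis by (rule AE_I'[OF null_setsI[OF e s] sub])
qed

lemma funpow_mp:
  assumes f: "f \<in> M \<rightarrow>\<^sub>M M" and d: "distr M M f = M"
  shows "(f ^^ n) \<in> M \<rightarrow>\<^sub>M M \<and> distr M M (f ^^ n) = M"
proof (induction n)
  case 0 then show ?case by (simp add: distr_id)
next
  case (Suc n)
  then have m: "(f ^^ n) \<in> M \<rightarrow>\<^sub>M M" and dn: "distr M M (f ^^ n) = M" by auto
  have eq: "(f ^^ Suc n) = f \<circ> (f ^^ n)" by simp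
  have 1: "f \<circ> (f ^^ n) \<in> M \<rightarrow>\<^sub>M M" using m f by (rule measurable_comp)
  have 2: "distr M M (f \<circ> (f ^^ n)) = M"
    using distr_distr[OF f m] dn d by simp
  show ?case unfolding eq using 1 2 by blast
qed

lemma AE_shift_pow:
  assumes f: "f \<in> M \<rightarrow>\<^sub>M M" and d: "distr M M f = M" and ae: "AE x in M. P x"
  shows "AE x in M. \<forall>n. P ((f ^^ n) x)"
proof (subst AE_all_countable, intro allI)
  fix n
  have m: "(f ^^ n) \<in> M \<rightarrow>\<^sub>M M" and dn: "distr M M (f ^^ n) = M" using funpow_mp[OF f d, of n] by auto
  show "AE x in M. P ((f ^^ n) x)" by (rule AE_shift[OF m dn ae])
qed

lemma inv_mp:
  assumes b: "bij_betw \<theta> (space M) (space M)" and t: "\<theta> \<in> M \<rightarrow>\<^sub>M M"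
    and s: "inv_into (space M) \<theta> \<in> M \<rightarrow>\<^sub>M M" and d: "distr M M \<theta> = M"
  shows "distr M M (inv_into (space M) \<theta>) = M"
proof (rule measure_eqI)
  show "sets (distr M M (inv_into (space M) \<theta>)) = sets M" by simp
next
  fix A assume "A \<in> sets (distr M M (inv_into (space M) \<theta>))"
  then have A: "A \<in> sets M" by simp
  then have Asub: "A \<subseteq> space M" by (rule sets.sets_into_space)
  have inj: "inj_on \<theta> (space M)" using b by (rule bij_betw_imp_inj_on)
  have img: "\<theta> ` space M = space M" using b by (rule bij_betw_imp_surj_on)
  have eq: "inv_into (space M) \<theta> -` A \<inter> space M = \<theta> ` A"
  proof
    show "inv_into (space M) \<theta> -` A \<inter> space M \<subseteq> \<theta> ` A"
    proof
      fix x assume x: "x \<in> inv_into (space M) \<theta> -` A \<inter> space M"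
      then have "\<theta> (inv_into (space M) \<theta> x) = x" using bij_betw_inv_into_right[OF b] by blast
      moreover have "inv_into (space M) \<theta> x \<in> A" using x by simp
      ultimately show "x \<in> \<theta> ` A" using image_eqI[of x \<theta> "inv_into (space M) \<theta> x" A] by simp
    qed
  next
    show "\<theta> ` A \<subseteq> inv_into (space M) \<theta> -` A \<inter> space M"
    proof
      fix y assume "y \<in> \<theta> ` A"
      then obtain a where a: "a \<in> A" "y = \<theta> a" by blast
      then have "a \<in> space M" using Asub by blast
      then have "inv_into (space M) \<theta> y = a" "y \<in> space M" using inv_into_f_f[OF inj] a img by auto
      then show "y \<in> inv_into (space M) \<theta> -` A \<inter> space M" using a by simp
    qed
  qed
  have tA: "\<theta> ` A \<in> sets M" using measurable_sets[OF s A] eq by simp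
  have pre: "\<theta> -` (\<theta> ` A) \<inter> space M = A" using inj Asub by (auto simp: inj_on_def)
  have "emeasure (distr M M (inv_into (space M) \<theta>)) A = emeasure M (\<theta> ` A)"
    using emeasure_distr[OF s A] eq by simp
  also have "\<dots> = emeasure (distr M M \<theta>) (\<theta> ` A)" using d by simp
  also have "\<dots> = emeasure M A" using emeasure_distr[OF t tA] pre by simp
  finally show "emeasure (distr M M (inv_into (space M) \<theta>)) A = emeasure M A" .
qed

lemma inv_erg:
  assumes b: "bij_betw \<theta> (space M) (space M)"
    and erg: "\<forall>A\<in>sets M. \<theta> -` A \<inter> space M = A \<longrightarrow> measure M A = 0 \<or> measure M A = 1"
  shows "\<forall>A\<in>sets M. inv_into (space M) \<theta> -` A \<inter> space M = A \<longrightarrow> measure M A = 0 \<or> measure M A = 1"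
proof (intro ballI impI)
  fix A assume A: "A \<in> sets M" and inv: "inv_into (space M) \<theta> -` A \<inter> space M = A"
  have inj: "inj_on \<theta> (space M)" using b by (rule bij_betw_imp_inj_on)
  have "\<theta> -` A \<inter> space M = A"
  proof (intro set_eqI iffI)
    fix x assume x: "x \<in> \<theta> -` A \<inter> space M"
    then have "\<theta> x \<in> A" "x \<in> space M" by auto
    then have "\<theta> x \<in> inv_into (space M) \<theta> -` A \<inter> space M" using inv by simp
    then show "x \<in> A" using inv_into_f_f[OF inj \<open>x \<in> space M\<close>] by simp
  next
    fix x assume x: "x \<in> A"
    then have xs: "x \<in> space M" using sets.sets_into_space[OF A] by blast
    have ts: "\<theta> x \<in> space M" using b xs by (auto simp: bij_betw_def)
    have "inv_into (space M) \<theta> (\<theta> x) \<in> A" using inv_into_f_f[OF inj xs] x by simp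
    then have "\<theta> x \<in> inv_into (space M) \<theta> -` A \<inter> space M" using ts by simp
    then show "x \<in> \<theta> -` A \<inter> space M" using inv xs by simp
  qed
  then show "measure M A = 0 \<or> measure M A = 1" using erg A by blast
qed

lemma recurrence:
  assumes P: "prob_space M" and f: "f \<in> M \<rightarrow>\<^sub>M M" and d: "distr M M f = M"
    and erg: "\<forall>A\<in>sets M. f -` A \<inter> space M = A \<longrightarrow> measure M A = 0 \<or> measure M A = 1"
    and A: "A \<in> sets M" and pos: "measure M A > 0"
  shows "AE x in M. \<forall>m. \<exists>t\<ge>m. (f ^^ t) x \<in> A"
proof -
  interpret prob_space M by (rule P)
  define U where "U m = (\<Union>t\<in>{m..}. (f ^^ t) -` A \<inter> space M)" for m
  have fm: "(f ^^ t) \<in> M \<rightarrow>\<^sub>M M" for t using funpow_mp[OF f d] by blast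
  have Us: "U m \<in> sets M" for m
    unfolding U_def using measurable_sets[OF fm A] by blast
  have shift: "f -` U m \<inter> space M = U (Suc m)" for m
  proof (intro set_eqI iffI)
    fix x assume x: "x \<in> f -` U m \<inter> space M"
    then obtain t where "t \<ge> m" "(f ^^ t) (f x) \<in> A" unfolding U_def by auto
    then have "Suc t \<ge> Suc m" "(f ^^ Suc t) x \<in> A" by (auto simp: funpow_swap1)
    then show "x \<in> U (Suc m)" using x unfolding U_def by blast
  next
    fix x assume x: "x \<in> U (Suc m)"
    then obtain t where t: "t \<ge> Suc m" "(f ^^ t) x \<in> A" "x \<in> space M" unfolding U_def by auto
    then obtain s where s: "t = Suc s" "s \<ge> m" by (cases t) auto
    then have "(f ^^ s) (f x) \<in> A" using t by (simp add: funpow_swap1)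
    moreover have "f x \<in> space M" using measurable_space[OF f t(3)] .
    ultimately show "x \<in> f -` U m \<inter> space M" using s t unfolding U_def by auto
  qed
  have msuc: "measure M (U (Suc m)) = measure M (U m)" for m
  proof -
    have "measure M (U m) = measure (distr M M f) (U m)" using d by simp
    also have "\<dots> = measure M (f -` U m \<inter> space M)" using measure_distr[OF f Us] by simp
    finally show ?thesis using shift by simp
  qed
  have m0: "measure M (U m) = measure M (U 0)" for m
    by (induction m) (auto simp: msuc)
  have dec: "U m \<subseteq> U 0" for m unfolding U_def by auto
  define E where "E = (\<Inter>m. U m)"
  have Es: "E \<in> sets M" unfolding E_def using Us by blast
  have null: "U 0 - U m \<in> null_sets M" for m
  proof -
    have "measure M (U 0 - U m) = measure M (U 0) - measure M (U m)"
      using finite_measure_Diff[OF Us Us dec] .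
    then have "measure M (U 0 - U m) = 0" using m0[of m] by simp
    moreover have "U 0 - U m \<in> sets M" using Us by blast
    ultimately show ?thesis by (simp add: emeasure_eq_measure null_setsI)
  qed
  have "(\<Union>m. U 0 - U m) \<in> null_sets M" using null by blast
  moreover have "U 0 - E = (\<Union>m. U 0 - U m)" unfolding E_def by blast
  ultimately have n2: "U 0 - E \<in> null_sets M" by simp
  have "measure M (U 0) \<le> measure M E + measure M (U 0 - E)"
  proof -
    have "U 0 \<subseteq> E \<union> (U 0 - E)" by blast
    then have "measure M (U 0) \<le> measure M (E \<union> (U 0 - E))"
      using Es Us by (intro finite_measure_mono) auto
    also have "\<dots> \<le> measure M E + measure M (U 0 - E)" using Es Us by (intro measure_Un_le) auto
    finally show ?thesis .
  qed
  moreover have "measure M (U 0 - E) = 0" using null_setsD1[OF n2] by (simp add: measure_def)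
  moreover have "A \<subseteq> U 0" unfolding U_def using sets.sets_into_space[OF A]
    by (auto intro!: exI[of _ 0])
  then have "measure M A \<le> measure M (U 0)" using A Us by (intro finite_measure_mono) auto
  ultimately have Epos: "measure M E > 0" using pos by linarith
  have Einv: "f -` E \<inter> space M = E"
  proof -
    have "f -` E \<inter> space M = (\<Inter>m. f -` U m \<inter> space M)" unfolding E_def by auto
    also have "\<dots> = (\<Inter>m. U (Suc m))" using shift by simp
    also have "\<dots> = E" unfolding E_def
    proof (intro set_eqI iffI)
      fix x assume "x \<in> (\<Inter>m. U (Suc m))"
      then have "x \<in> U (Suc m)" for m by blast
      moreover have "U (Suc 0) \<subseteq> U 0" unfolding U_def by auto
      ultimately have "x \<in> U m" for m by (cases m) auto
      then show "x \<in> (\<Inter>m. U m)" by blast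
    qed blast
    finally show ?thesis .
  qed
  have "measure M E = 0 \<or> measure M E = 1" using erg Es Einv by blast
  then have "measure M E = 1" using Epos by linarith
  then have "AE x in M. x \<in> E" using AE_in_set_eq_1[OF Es] by simp
  then show ?thesis
  proof (rule AE_mp, intro AE_I2 impI allI)
    fix x m assume "x \<in> E"
    then have "x \<in> U m" unfolding E_def by blast
    then show "\<exists>t\<ge>m. (f ^^ t) x \<in> A" unfolding U_def by blast
  qed
qed

lemma pos_level:
  assumes P: "prob_space M" and N: "N \<in> M \<rightarrow>\<^sub>M count_space (UNIV :: nat set)"
  shows "\<exists>L. {x\<in>space M. N x \<le> L} \<in> sets M \<and> measure M {x\<in>space M. N x \<le> L} > 0"
proof (rule ccontr)
  interpret prob_space M by (rule P)
  have s: "{x\<in>space M. N x \<le> L} \<in> sets M" for L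
  proof -
    have "N -` {..L} \<inter> space M \<in> sets M" using measurable_sets[OF N] by simp
    moreover have "N -` {..L} \<inter> space M = {x\<in>space M. N x \<le> L}" by auto
    ultimately show ?thesis by simp
  qed
  assume "\<not> ?thesis"
  then have nz: "\<not> measure M {x\<in>space M. N x \<le> L} > 0" for L using s by blast
  have "measure M {x\<in>space M. N x \<le> L} = 0" for L
    using measure_nonneg[of M "{x\<in>space M. N x \<le> L}"] nz[of L] by linarith
  then have "{x\<in>space M. N x \<le> L} \<in> null_sets M" for L using s by (simp add: emeasure_eq_measure null_setsI)
  then have "(\<Union>L. {x\<in>space M. N x \<le> L}) \<in> null_sets M" by blast
  moreover have "(\<Union>L. {x\<in>space M. N x \<le> L}) = space M" by auto
  ultimately have "emeasure M (space M) = 0" by auto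
  then show False using emeasure_space_1 by simp
qed


locale shifts =
  fixes \<Omega> :: "'a set" and \<theta> \<sigma> :: "'a \<Rightarrow> 'a"
  assumes tin: "x \<in> \<Omega> \<Longrightarrow> \<theta> x \<in> \<Omega>" and sin: "x \<in> \<Omega> \<Longrightarrow> \<sigma> x \<in> \<Omega>"
    and ts: "x \<in> \<Omega> \<Longrightarrow> \<theta> (\<sigma> x) = x" and st: "x \<in> \<Omega> \<Longrightarrow> \<sigma> (\<theta> x) = x"
begin

lemma spow_in: "x \<in> \<Omega> \<Longrightarrow> (\<sigma> ^^ n) x \<in> \<Omega>"
  by (induction n) (auto intro: sin)

lemma tpow_in: "x \<in> \<Omega> \<Longrightarrow> (\<theta> ^^ n) x \<in> \<Omega>"
  by (induction n) (auto intro: tin)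

lemma ts_pow: "x \<in> \<Omega> \<Longrightarrow> (\<theta> ^^ a) ((\<sigma> ^^ (a + b)) x) = (\<sigma> ^^ b) x"
proof (induction a)
  case 0 then show ?case by simp
next
  case (Suc a)
  have y: "(\<sigma> ^^ (a + b)) x \<in> \<Omega>" using spow_in Suc.prems by blast
  have e1: "(\<sigma> ^^ (Suc a + b)) x = \<sigma> ((\<sigma> ^^ (a + b)) x)" by simp
  have e2: "(\<theta> ^^ Suc a) y = (\<theta> ^^ a) (\<theta> y)" for y by (simp add: funpow_swap1)
  have "(\<theta> ^^ Suc a) ((\<sigma> ^^ (Suc a + b)) x) = (\<theta> ^^ a) (\<theta> (\<sigma> ((\<sigma> ^^ (a + b)) x)))"
    by (simp only: e1 e2)
  also have "\<dots> = (\<theta> ^^ a) ((\<sigma> ^^ (a + b)) x)" using ts[OF y] by simp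
  finally show ?case using Suc by simp
qed

lemma st_pow: "x \<in> \<Omega> \<Longrightarrow> (\<sigma> ^^ (a + b)) ((\<theta> ^^ a) x) = (\<sigma> ^^ b) x"
proof (induction a)
  case 0 then show ?case by simp
next
  case (Suc a)
  have y: "(\<theta> ^^ a) x \<in> \<Omega>" using tpow_in Suc.prems by blast
  have e1: "(\<theta> ^^ Suc a) x = \<theta> ((\<theta> ^^ a) x)" by simp
  have e2: "(\<sigma> ^^ (Suc a + b)) y = (\<sigma> ^^ (a + b)) (\<sigma> y)" for y by (simp add: funpow_swap1)
  have "(\<sigma> ^^ (Suc a + b)) ((\<theta> ^^ Suc a) x) = (\<sigma> ^^ (a + b)) (\<sigma> (\<theta> ((\<theta> ^^ a) x)))"
    by (simp only: e1 e2)
  also have "\<dots> = (\<sigma> ^^ (a + b)) ((\<theta> ^^ a) x)" using st[OF y] by simp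
  finally show ?case using Suc by simp
qed

end

definition goodpt :: "(real \<Rightarrow> nat \<Rightarrow> 'a \<Rightarrow> real^'k::finite^'k) \<Rightarrow> ('a \<Rightarrow> 'a) \<Rightarrow> ('a \<Rightarrow> nat) \<Rightarrow> real \<Rightarrow> 'a \<Rightarrow> bool" where
  "goodpt X \<theta> N \<epsilon> x \<longleftrightarrow>
     (\<forall>n. column_stochastic (X \<epsilon> n x)) \<and> X \<epsilon> 0 x = mat 1 \<and>
     (\<forall>m n. X \<epsilon> (m + n) x = X \<epsilon> m ((\<theta> ^^ n) x) ** X \<epsilon> n x) \<and>
     opnorm1 (X \<epsilon> 1 x - X 0 1 x) \<le> \<epsilon> \<and>
     (\<forall>n. column_stochastic (X 0 n x)) \<and> X 0 0 x = mat 1 \<and>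
     (\<forall>m n. X 0 (m + n) x = X 0 m ((\<theta> ^^ n) x) ** X 0 n x) \<and>
     (\<forall>n i j. X 0 n x $ i $ j \<in> {0, 1}) \<and>
     (\<forall>i j. \<forall>n\<ge>N x. drn_map (X 0) n x i = drn_map (X 0) n x j)"

lemma gp_close:
  assumes g: "\<And>k. k \<le> n \<Longrightarrow> goodpt X \<theta> N \<epsilon> ((\<theta> ^^ k) x)" and e: "0 \<le> \<epsilon>"
  shows "mclose (X \<epsilon> n x) (X 0 n x) (real n * \<epsilon>)"
  using g
proof (induction n)
  case 0
  then have "goodpt X \<theta> N \<epsilon> x" by (metis funpow_0 le_refl)
  then have "X \<epsilon> 0 x = mat 1" "X 0 0 x = mat 1" unfolding goodpt_def by auto
  then show ?case using mclose_refl by simp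
next
  case (Suc n)
  have gx: "goodpt X \<theta> N \<epsilon> x" using Suc.prems[of 0] by simp
  have gn: "goodpt X \<theta> N \<epsilon> ((\<theta> ^^ n) x)" using Suc.prems[of n] by simp
  have IH: "mclose (X \<epsilon> n x) (X 0 n x) (real n * \<epsilon>)" using Suc by simp
  have c1: "X \<epsilon> (Suc n) x = X \<epsilon> 1 ((\<theta> ^^ n) x) ** X \<epsilon> n x"
    using gx unfolding goodpt_def by (metis add.commute plus_1_eq_Suc)
  have c0: "X 0 (Suc n) x = X 0 1 ((\<theta> ^^ n) x) ** X 0 n x"
    using gx unfolding goodpt_def by (metis add.commute plus_1_eq_Suc)
  have A: "column_stochastic (X \<epsilon> 1 ((\<theta> ^^ n) x))" using gn unfolding goodpt_def by blast
  have B: "column_stochastic (X 0 n x)" using gx unfolding goodpt_def by blast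
  have cA: "mclose (X \<epsilon> 1 ((\<theta> ^^ n) x)) (X 0 1 ((\<theta> ^^ n) x)) \<epsilon>"
    using gn unfolding goodpt_def by (intro mclose_opnorm) blast
  have "mclose (X \<epsilon> (Suc n) x) (X 0 (Suc n) x) (\<epsilon> + real n * \<epsilon>)"
    unfolding c1 c0 by (rule mclose_mult[OF A B e cA IH])
  then show ?case by (simp add: algebra_simps)
qed

lemma sync_const:
  assumes g: "goodpt X \<theta> N \<epsilon> x" and sy: "\<forall>i j. drn_map (X 0) n x i = drn_map (X 0) n x j"
  shows "X 0 n x *v v = (\<Sum>j\<in>UNIV. v $ j) *\<^sub>R axis (drn_map (X 0) n x undefined) 1"
proof (rule drn_const)
  show "column_stochastic (X 0 n x)" using g unfolding goodpt_def by blast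
  show "\<forall>i j. X 0 n x $ i $ j \<in> {0, 1}" using g unfolding goodpt_def by blast
  show "\<forall>j. (THE i. X 0 n x $ i $ j = 1) = drn_map (X 0) n x undefined"
    using sy unfolding drn_map_def by blast
qed

lemma bound_pt:
  assumes g: "\<And>k. k \<le> n \<Longrightarrow> goodpt X \<theta> N \<epsilon> ((\<theta> ^^ k) x)" and e: "0 \<le> \<epsilon>"
    and sy: "\<forall>i j. drn_map (X 0) n x i = drn_map (X 0) n x j" and q: "q \<in> simplex1"
  shows "l1norm (X \<epsilon> n x *v q - axis (drn_map (X 0) n x undefined) 1) \<le> real n * \<epsilon>"
proof -
  have gx: "goodpt X \<theta> N \<epsilon> x" using g[of 0] by simp
  have "X 0 n x *v q = axis (drn_map (X 0) n x undefined) 1"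
    using sync_const[OF gx sy, of q] q by (simp add: simplex1_def)
  then have "X \<epsilon> n x *v q - axis (drn_map (X 0) n x undefined) 1 = (X \<epsilon> n x - X 0 n x) *v q"
    by (simp add: matrix_vector_mult_diff_rdistrib)
  moreover have "l1norm ((X \<epsilon> n x - X 0 n x) *v q) \<le> real n * \<epsilon> * l1norm q"
    using gp_close[OF g e] unfolding mclose_def by blast
  ultimately show ?thesis using l1norm_simplex[OF q] by simp
qed

lemma block_contr:
  assumes g: "\<And>k. k \<le> n \<Longrightarrow> goodpt X \<theta> N \<epsilon> ((\<theta> ^^ k) x)" and e: "0 \<le> \<epsilon>"
    and sy: "\<forall>i j. drn_map (X 0) n x i = drn_map (X 0) n x j" and small: "real n * \<epsilon> \<le> 1/2"
  shows "contr (X \<epsilon> n x) (1/2)"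
  unfolding contr_def
proof (intro allI impI)
  fix v :: "real^'b" assume z: "zs v"
  have gx: "goodpt X \<theta> N \<epsilon> x" using g[of 0] by simp
  have "X 0 n x *v v = 0"
    using sync_const[OF gx sy, of v] z by (simp add: zs_def)
  then have "X \<epsilon> n x *v v = (X \<epsilon> n x - X 0 n x) *v v"
    by (simp add: matrix_vector_mult_diff_rdistrib)
  moreover have "l1norm ((X \<epsilon> n x - X 0 n x) *v v) \<le> real n * \<epsilon> * l1norm v"
    using gp_close[OF g e] unfolding mclose_def by blast
  moreover have "real n * \<epsilon> * l1norm v \<le> 1/2 * l1norm v"
    using small l1norm_nonneg[of v] by (rule mult_right_mono)
  ultimately show "l1norm (X \<epsilon> n x *v v) \<le> 1/2 * l1norm v" by simp
qed

lemma contr_mult: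
  fixes A B :: "real^'n::finite^'n"
  assumes B: "column_stochastic B" and a: "contr A a" and b: "contr B b" and a0: "0 \<le> a"
  shows "contr (A ** B) (a * b)"
  unfolding contr_def
proof (intro allI impI)
  fix v :: "real^'n" assume z: "zs v"
  have "l1norm (A *v (B *v v)) \<le> a * l1norm (B *v v)" using a zs_stoch[OF B z] unfolding contr_def by blast
  also have "\<dots> \<le> a * (b * l1norm v)" using b z a0 unfolding contr_def by (simp add: mult_left_mono)
  finally show "l1norm ((A ** B) *v v) \<le> a * b * l1norm v" by (simp add: matrix_vector_mul_assoc mult.assoc)
qed


definition plim :: "(real \<Rightarrow> nat \<Rightarrow> 'a \<Rightarrow> real^'k::finite^'k) \<Rightarrow> ('a \<Rightarrow> 'a) \<Rightarrow> real \<Rightarrow> 'a \<Rightarrow> real^'k" where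
  "plim X \<sigma> \<epsilon> \<omega> = (if Cauchy (\<lambda>n. X \<epsilon> n ((\<sigma> ^^ n) \<omega>) *v axis undefined 1) \<and>
       lim (\<lambda>n. X \<epsilon> n ((\<sigma> ^^ n) \<omega>) *v axis undefined 1) \<in> simplex1
     then lim (\<lambda>n. X \<epsilon> n ((\<sigma> ^^ n) \<omega>) *v axis undefined 1) else axis undefined 1)"

lemma plim_eqI:
  assumes "(\<lambda>n. X \<epsilon> n ((\<sigma> ^^ n) \<omega>) *v axis undefined 1) \<longlonglongrightarrow> p" "p \<in> simplex1"
  shows "plim X \<sigma> \<epsilon> \<omega> = p"
proof -
  have "Cauchy (\<lambda>n. X \<epsilon> n ((\<sigma> ^^ n) \<omega>) *v axis undefined 1)"
    using assms(1) by (rule LIMSEQ_imp_Cauchy)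
  moreover have "lim (\<lambda>n. X \<epsilon> n ((\<sigma> ^^ n) \<omega>) *v axis undefined 1) = p"
    using assms(1) by (rule limI)
  ultimately show ?thesis using assms(2) unfolding plim_def by simp
qed

lemma plim_simplex: "plim X \<sigma> \<epsilon> \<omega> \<in> simplex1"
  unfolding plim_def using axis_simplex by auto

definition goodw :: "'a set \<Rightarrow> ('a \<Rightarrow> 'a) \<Rightarrow> ('a \<Rightarrow> 'a) \<Rightarrow> (real \<Rightarrow> nat \<Rightarrow> 'a \<Rightarrow> real^'k::finite^'k) \<Rightarrow> ('a \<Rightarrow> nat) \<Rightarrow> real \<Rightarrow> nat \<Rightarrow> 'a \<Rightarrow> bool" where
  "goodw \<Omega> \<theta> \<sigma> X N \<epsilon> L \<omega> \<longleftrightarrow> \<omega> \<in> \<Omega> \<and> (\<forall>n. goodpt X \<theta> N \<epsilon> ((\<theta> ^^ n) \<omega>) \<and> goodpt X \<theta> N \<epsilon> ((\<sigma> ^^ n) \<omega>)) \<and>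
     (\<forall>m. \<exists>t\<ge>m. N ((\<theta> ^^ t) \<omega>) \<le> L) \<and> (\<forall>m. \<exists>t\<ge>m. N ((\<sigma> ^^ t) \<omega>) \<le> L)"

locale fixed = shifts \<Omega> \<theta> \<sigma> for \<Omega> :: "'a set" and \<theta> \<sigma> +
  fixes X :: "real \<Rightarrow> nat \<Rightarrow> 'a \<Rightarrow> real^'k::finite^'k" and N :: "'a \<Rightarrow> nat" and \<epsilon> :: real and L :: nat
  assumes e0: "0 \<le> \<epsilon>" and small: "real L * \<epsilon> \<le> 1/2"
begin

abbreviation good where "good \<equiv> goodw \<Omega> \<theta> \<sigma> X N \<epsilon> L"
lemmas good_def = goodw_def

lemma good_ts:
  assumes g: "good \<omega>"
  shows "goodpt X \<theta> N \<epsilon> ((\<theta> ^^ k) ((\<sigma> ^^ n) \<omega>))"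
proof (cases "k \<le> n")
  case True
  then have "(\<theta> ^^ k) ((\<sigma> ^^ n) \<omega>) = (\<sigma> ^^ (n - k)) \<omega>"
    using ts_pow[of \<omega> k "n - k"] g unfolding good_def by simp
  then show ?thesis using g unfolding good_def by simp
next
  case False
  then have "(\<theta> ^^ k) ((\<sigma> ^^ n) \<omega>) = (\<theta> ^^ (k - n)) ((\<theta> ^^ n) ((\<sigma> ^^ n) \<omega>))"
    by (metis funpow_add comp_apply le_add_diff_inverse2 nat_le_linear)
  also have "(\<theta> ^^ n) ((\<sigma> ^^ n) \<omega>) = \<omega>"
    using ts_pow[of \<omega> n 0] g unfolding good_def by simp
  finally show ?thesis using g unfolding good_def by simp
qed

lemma good_tt:
  assumes g: "good \<omega>"
  shows "goodpt X \<theta> N \<epsilon> ((\<theta> ^^ k) ((\<theta> ^^ n) \<omega>))"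
proof -
  have "(\<theta> ^^ k) ((\<theta> ^^ n) \<omega>) = (\<theta> ^^ (k + n)) \<omega>" by (simp add: funpow_add)
  then show ?thesis using g unfolding good_def by simp
qed

lemma gp_sync: "goodpt X \<theta> N \<epsilon> x \<Longrightarrow> N x \<le> n \<Longrightarrow> \<forall>i j. drn_map (X 0) n x i = drn_map (X 0) n x j"
  unfolding goodpt_def by blast

lemma gp_stoch: "goodpt X \<theta> N \<epsilon> x \<Longrightarrow> column_stochastic (X \<epsilon> n x)"
  unfolding goodpt_def by blast

lemma gp_coc: "goodpt X \<theta> N \<epsilon> x \<Longrightarrow> X \<epsilon> (m + n) x = X \<epsilon> m ((\<theta> ^^ n) x) ** X \<epsilon> n x"
  unfolding goodpt_def by blast

lemma fwd_contr:
  assumes g: "good \<omega>"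
  shows "\<exists>M. \<forall>n\<ge>M. contr (X \<epsilon> n \<omega>) ((1/2)^j)"
proof (rule contract_seq)
  show "contr (X \<epsilon> n \<omega>) 1" for n
    using good_tt[OF g, of 0 0] by (intro contr_stoch gp_stoch) simp
  fix m
  obtain t where t: "t \<ge> m" "N ((\<theta> ^^ t) \<omega>) \<le> L" using g unfolding good_def by blast
  define x where "x = (\<theta> ^^ t) \<omega>"
  have gx: "goodpt X \<theta> N \<epsilon> ((\<theta> ^^ k) x)" for k unfolding x_def by (rule good_tt[OF g])
  have gw: "goodpt X \<theta> N \<epsilon> \<omega>" using good_tt[OF g, of 0 0] by simp
  have gx0: "goodpt X \<theta> N \<epsilon> x" using gx[of 0] by simp
  have sy: "\<forall>i j. drn_map (X 0) L x i = drn_map (X 0) L x j"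
    using gp_sync[OF gx0] t(2) unfolding x_def by blast
  have gxL: "\<And>k. k \<le> L \<Longrightarrow> goodpt X \<theta> N \<epsilon> ((\<theta> ^^ k) x)" using gx by blast
  have blk: "contr (X \<epsilon> L x) (1/2)" by (rule block_contr[OF gxL e0 sy small])
  have "\<forall>n\<ge>t+L. \<forall>b\<ge>0. contr (X \<epsilon> t \<omega>) b \<longrightarrow> contr (X \<epsilon> n \<omega>) (b/2)"
  proof (intro allI impI)
    fix n and b :: real assume n: "n \<ge> t + L" and b: "0 \<le> b" and cb: "contr (X \<epsilon> t \<omega>) b"
    have e1: "X \<epsilon> n \<omega> = X \<epsilon> (n - t) x ** X \<epsilon> t \<omega>"
      using gp_coc[OF gw, of "n - t" t] n unfolding x_def by simp
    have e2: "X \<epsilon> (n - t) x = X \<epsilon> (n - t - L) ((\<theta> ^^ L) x) ** X \<epsilon> L x"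
      using gp_coc[OF gx[of 0], of "n - t - L" L] n by simp
    have R: "contr (X \<epsilon> (n - t - L) ((\<theta> ^^ L) x)) 1" using gx[of L] by (intro contr_stoch gp_stoch)
    have c1: "contr (X \<epsilon> (n - t) x) (1 * (1/2))"
      unfolding e2 by (rule contr_mult[OF gp_stoch[OF gx[of 0, simplified]] R blk]) simp
    have "contr (X \<epsilon> n \<omega>) (1 * (1/2) * b)"
      unfolding e1 by (rule contr_mult[OF gp_stoch[OF gw] c1 cb]) simp
    then show "contr (X \<epsilon> n \<omega>) (b/2)" by simp
  qed
  then show "\<exists>t\<ge>m. \<forall>n\<ge>t+L. \<forall>b\<ge>0. contr (X \<epsilon> t \<omega>) b \<longrightarrow> contr (X \<epsilon> n \<omega>) (b/2)"
    using t(1) by blast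
qed


lemma bwd_split:
  assumes g: "good \<omega>"
  shows "\<exists>R. column_stochastic R \<and>
    X \<epsilon> (n + m) ((\<sigma> ^^ (n + m)) \<omega>) = X \<epsilon> n ((\<sigma> ^^ n) \<omega>) ** R"
proof -
  define y where "y = (\<sigma> ^^ (n + m)) \<omega>"
  have gy: "goodpt X \<theta> N \<epsilon> y" unfolding y_def using good_ts[OF g, of 0] by simp
  have "(\<theta> ^^ m) y = (\<sigma> ^^ n) \<omega>"
    unfolding y_def using ts_pow[of \<omega> m n] g unfolding good_def by (simp add: add.commute)
  then have "X \<epsilon> (n + m) y = X \<epsilon> n ((\<sigma> ^^ n) \<omega>) ** X \<epsilon> m y"
    using gp_coc[OF gy, of n m] by simp
  then show ?thesis using gp_stoch[OF gy] unfolding y_def by blast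
qed

lemma bwd_contr:
  assumes g: "good \<omega>"
  shows "\<exists>M. \<forall>n\<ge>M. contr (X \<epsilon> n ((\<sigma> ^^ n) \<omega>)) ((1/2)^j)"
proof (rule contract_seq)
  show "contr (X \<epsilon> n ((\<sigma> ^^ n) \<omega>)) 1" for n
    using good_ts[OF g, of 0 n] by (intro contr_stoch gp_stoch) simp
  fix m
  obtain s where s: "s \<ge> m + L" "N ((\<sigma> ^^ s) \<omega>) \<le> L" using g unfolding good_def by blast
  define t where "t = s - L"
  have st: "s = t + L" "t \<ge> m" using s(1) unfolding t_def by auto
  define x where "x = (\<sigma> ^^ s) \<omega>"
  have wO: "\<omega> \<in> \<Omega>" using g unfolding good_def by blast
  have gx: "goodpt X \<theta> N \<epsilon> ((\<theta> ^^ k) x)" for k unfolding x_def by (rule good_ts[OF g])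
  have gx0: "goodpt X \<theta> N \<epsilon> x" using gx[of 0] by simp
  have sy: "\<forall>i j. drn_map (X 0) L x i = drn_map (X 0) L x j"
    using gp_sync[OF gx0] s(2) unfolding x_def by blast
  have gxL: "\<And>k. k \<le> L \<Longrightarrow> goodpt X \<theta> N \<epsilon> ((\<theta> ^^ k) x)" using gx by blast
  have blk: "contr (X \<epsilon> L x) (1/2)" by (rule block_contr[OF gxL e0 sy small])
  have bs: "column_stochastic (X \<epsilon> L x)" by (rule gp_stoch[OF gx0])
  have xs: "X \<epsilon> s x = X \<epsilon> t ((\<sigma> ^^ t) \<omega>) ** X \<epsilon> L x"
  proof -
    have "(\<theta> ^^ L) x = (\<sigma> ^^ t) \<omega>" unfolding x_def st(1) using ts_pow[OF wO, of L t] by (simp add: add.commute)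
    then show ?thesis using gp_coc[OF gx0, of t L] st(1) by simp
  qed
  have "\<forall>n\<ge>t+L. \<forall>b\<ge>0. contr (X \<epsilon> t ((\<sigma> ^^ t) \<omega>)) b \<longrightarrow> contr (X \<epsilon> n ((\<sigma> ^^ n) \<omega>)) (b/2)"
  proof (intro allI impI)
    fix n and b :: real assume n: "n \<ge> t + L" and b: "0 \<le> b" and cb: "contr (X \<epsilon> t ((\<sigma> ^^ t) \<omega>)) b"
    obtain R where R: "column_stochastic R" "X \<epsilon> (s + (n - s)) ((\<sigma> ^^ (s + (n - s))) \<omega>) = X \<epsilon> s ((\<sigma> ^^ s) \<omega>) ** R"
      using bwd_split[OF g, of s "n - s"] by blast
    have e: "X \<epsilon> n ((\<sigma> ^^ n) \<omega>) = (X \<epsilon> t ((\<sigma> ^^ t) \<omega>) ** X \<epsilon> L x) ** R"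
      using R(2) n st(1) xs unfolding x_def by simp
    have c1: "contr (X \<epsilon> t ((\<sigma> ^^ t) \<omega>) ** X \<epsilon> L x) (b * (1/2))"
      by (rule contr_mult[OF bs cb blk b])
    have "contr ((X \<epsilon> t ((\<sigma> ^^ t) \<omega>) ** X \<epsilon> L x) ** R) (b * (1/2) * 1)"
      by (rule contr_mult[OF R(1) c1 contr_stoch[OF R(1)]]) (simp add: b)
    then show "contr (X \<epsilon> n ((\<sigma> ^^ n) \<omega>)) (b/2)" unfolding e by simp
  qed
  then show "\<exists>t\<ge>m. \<forall>n\<ge>t+L. \<forall>b\<ge>0. contr (X \<epsilon> t ((\<sigma> ^^ t) \<omega>)) b \<longrightarrow> contr (X \<epsilon> n ((\<sigma> ^^ n) \<omega>)) (b/2)"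
    using st(2) by blast
qed

lemma plim_pull:
  assumes g: "good \<omega>" and q: "q \<in> simplex1"
  shows "(\<lambda>n. l1norm (X \<epsilon> n ((\<sigma> ^^ n) \<omega>) *v q - plim X \<sigma> \<epsilon> \<omega>)) \<longlonglongrightarrow> 0"
proof -
  have "\<exists>p\<in>simplex1. \<forall>q\<in>simplex1. (\<lambda>n. l1norm (X \<epsilon> n ((\<sigma> ^^ n) \<omega>) *v q - p)) \<longlonglongrightarrow> 0"
  proof (rule pullback_lim)
    show "column_stochastic (X \<epsilon> n ((\<sigma> ^^ n) \<omega>))" for n using good_ts[OF g, of 0 n] gp_stoch by simp
    show "\<exists>R. column_stochastic R \<and> X \<epsilon> (n + m) ((\<sigma> ^^ (n + m)) \<omega>) = X \<epsilon> n ((\<sigma> ^^ n) \<omega>) ** R" for n m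
      by (rule bwd_split[OF g])
    show "\<exists>N. \<forall>n\<ge>N. contr (X \<epsilon> n ((\<sigma> ^^ n) \<omega>)) e" if "e > 0" for e
      using contr_small[OF bwd_contr[OF g] that] .
  qed
  then obtain p where p: "p \<in> simplex1" "\<And>q. q \<in> simplex1 \<Longrightarrow> (\<lambda>n. l1norm (X \<epsilon> n ((\<sigma> ^^ n) \<omega>) *v q - p)) \<longlonglongrightarrow> 0"
    by blast
  have "(\<lambda>n. X \<epsilon> n ((\<sigma> ^^ n) \<omega>) *v axis undefined 1) \<longlonglongrightarrow> p"
    using p(2)[OF axis_simplex] l1norm_tendsto_iff[of "\<lambda>n. X \<epsilon> n ((\<sigma> ^^ n) \<omega>) *v axis undefined 1" p] by simp
  then have "plim X \<sigma> \<epsilon> \<omega> = p" using p(1) by (rule plim_eqI)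
  then show ?thesis using p(2)[OF q] by simp
qed

lemma mult_tendsto:
  assumes A: "column_stochastic A" and f: "f \<longlonglongrightarrow> p"
  shows "(\<lambda>k. A *v f k) \<longlonglongrightarrow> A *v p"
proof -
  have lim: "(\<lambda>k. l1norm (f k - p)) \<longlonglongrightarrow> 0" using f l1norm_tendsto_iff by blast
  have ev: "\<forall>\<^sub>F k in sequentially. norm (l1norm (A *v f k - A *v p)) \<le> l1norm (f k - p)"
    by (intro always_eventually allI)
       (simp add: abs_of_nonneg[OF l1norm_nonneg] stoch_nonexp[OF A] matrix_vector_mult_diff_distrib[symmetric])
  have "(\<lambda>k. l1norm (A *v f k - A *v p)) \<longlonglongrightarrow> 0" by (rule Lim_null_comparison[OF ev lim])
  then show ?thesis using l1norm_tendsto_iff[of "\<lambda>k. A *v f k"] by simp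
qed

lemma plim_inv:
  assumes g: "good \<omega>"
  shows "X \<epsilon> n \<omega> *v plim X \<sigma> \<epsilon> \<omega> = plim X \<sigma> \<epsilon> ((\<theta> ^^ n) \<omega>)"
proof -
  have wO: "\<omega> \<in> \<Omega>" using g unfolding good_def by blast
  define p where "p = plim X \<sigma> \<epsilon> \<omega>"
  define e0 :: "real^'k" where "e0 = axis undefined 1"
  have gw: "goodpt X \<theta> N \<epsilon> \<omega>" using good_tt[OF g, of 0 0] by simp
  have A: "column_stochastic (X \<epsilon> n \<omega>)" by (rule gp_stoch[OF gw])
  have conv: "(\<lambda>k. X \<epsilon> k ((\<sigma> ^^ k) \<omega>) *v e0) \<longlonglongrightarrow> p"
    using plim_pull[OF g axis_simplex] l1norm_tendsto_iff[of "\<lambda>k. X \<epsilon> k ((\<sigma> ^^ k) \<omega>) *v e0" p]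
    unfolding p_def e0_def by simp
  have eq: "X \<epsilon> (k + n) ((\<sigma> ^^ (k + n)) ((\<theta> ^^ n) \<omega>)) *v e0 = X \<epsilon> n \<omega> *v (X \<epsilon> k ((\<sigma> ^^ k) \<omega>) *v e0)" for k
  proof -
    have z: "goodpt X \<theta> N \<epsilon> ((\<sigma> ^^ k) \<omega>)" using good_ts[OF g, of 0 k] by simp
    have "(\<sigma> ^^ (k + n)) ((\<theta> ^^ n) \<omega>) = (\<sigma> ^^ k) \<omega>" using st_pow[OF wO, of n k] by (simp add: add.commute)
    moreover have "(\<theta> ^^ k) ((\<sigma> ^^ k) \<omega>) = \<omega>" using ts_pow[OF wO, of k 0] by simp
    ultimately show ?thesis using gp_coc[OF z, of n k] by (simp add: add.commute matrix_vector_mul_assoc)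
  qed
  have "(\<lambda>k. X \<epsilon> n \<omega> *v (X \<epsilon> k ((\<sigma> ^^ k) \<omega>) *v e0)) \<longlonglongrightarrow> X \<epsilon> n \<omega> *v p"
    by (rule mult_tendsto[OF A conv])
  then have "(\<lambda>k. X \<epsilon> (k + n) ((\<sigma> ^^ (k + n)) ((\<theta> ^^ n) \<omega>)) *v e0) \<longlonglongrightarrow> X \<epsilon> n \<omega> *v p"
    unfolding eq .
  then have "(\<lambda>k. X \<epsilon> k ((\<sigma> ^^ k) ((\<theta> ^^ n) \<omega>)) *v e0) \<longlonglongrightarrow> X \<epsilon> n \<omega> *v p"
    by (rule LIMSEQ_offset)
  moreover have "X \<epsilon> n \<omega> *v p \<in> simplex1" unfolding p_def by (rule stoch_simplex[OF A plim_simplex])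
  ultimately have "plim X \<sigma> \<epsilon> ((\<theta> ^^ n) \<omega>) = X \<epsilon> n \<omega> *v p" unfolding e0_def by (rule plim_eqI)
  then show ?thesis unfolding p_def by simp
qed

lemma plim_fwd:
  assumes g: "good \<omega>" and q: "q \<in> simplex1"
  shows "(\<lambda>n. l1norm (X \<epsilon> n \<omega> *v q - plim X \<sigma> \<epsilon> ((\<theta> ^^ n) \<omega>))) \<longlonglongrightarrow> 0"
proof (rule forward_lim)
  show "\<exists>M. \<forall>n\<ge>M. contr (X \<epsilon> n \<omega>) e" if "e > 0" for e
    using contr_small[OF fwd_contr[OF g] that] .
  show "X \<epsilon> n \<omega> *v plim X \<sigma> \<epsilon> \<omega> = plim X \<sigma> \<epsilon> ((\<theta> ^^ n) \<omega>)" for n by (rule plim_inv[OF g])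
  show "plim X \<sigma> \<epsilon> \<omega> \<in> simplex1" by (rule plim_simplex)
  show "q \<in> simplex1" by (rule q)
qed

lemma plim_bound:
  assumes g: "good \<omega>" and sy: "\<forall>i j. drn_map (X 0) n ((\<sigma> ^^ n) \<omega>) i = drn_map (X 0) n ((\<sigma> ^^ n) \<omega>) j"
  shows "l1norm (plim X \<sigma> \<epsilon> \<omega> - axis (drn_map (X 0) n ((\<sigma> ^^ n) \<omega>) undefined) 1) \<le> real n * \<epsilon>"
proof (rule field_le_epsilon)
  fix d :: real assume d: "d > 0"
  define a where "a = (axis (drn_map (X 0) n ((\<sigma> ^^ n) \<omega>) undefined) 1 :: real^'k)"
  define e0 :: "real^'k" where "e0 = axis undefined 1"
  define p where "p = plim X \<sigma> \<epsilon> \<omega>"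
  have "(\<lambda>m. l1norm (X \<epsilon> m ((\<sigma> ^^ m) \<omega>) *v e0 - p)) \<longlonglongrightarrow> 0"
    unfolding p_def e0_def by (rule plim_pull[OF g axis_simplex])
  from order_tendstoD(2)[OF this d] obtain M where M: "\<And>m. m \<ge> M \<Longrightarrow> l1norm (X \<epsilon> m ((\<sigma> ^^ m) \<omega>) *v e0 - p) < d"
    unfolding eventually_sequentially by blast
  define m where "m = max M n"
  obtain R where R: "column_stochastic R" "X \<epsilon> (n + (m - n)) ((\<sigma> ^^ (n + (m - n))) \<omega>) = X \<epsilon> n ((\<sigma> ^^ n) \<omega>) ** R"
    using bwd_split[OF g, of n "m - n"] by blast
  have mn: "n + (m - n) = m" unfolding m_def by simp
  have gk: "\<And>k. k \<le> n \<Longrightarrow> goodpt X \<theta> N \<epsilon> ((\<theta> ^^ k) ((\<sigma> ^^ n) \<omega>))" using good_ts[OF g] by blast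
  have rs: "R *v e0 \<in> simplex1" unfolding e0_def by (rule stoch_simplex[OF R(1) axis_simplex])
  have "l1norm (X \<epsilon> n ((\<sigma> ^^ n) \<omega>) *v (R *v e0) - a) \<le> real n * \<epsilon>"
    unfolding a_def by (rule bound_pt[OF gk e0 sy rs])
  then have b1: "l1norm (X \<epsilon> m ((\<sigma> ^^ m) \<omega>) *v e0 - a) \<le> real n * \<epsilon>"
    using R(2) unfolding mn by (simp add: matrix_vector_mul_assoc)
  have b2: "l1norm (p - X \<epsilon> m ((\<sigma> ^^ m) \<omega>) *v e0) < d"
    using M[of m] l1norm_minus[of p] unfolding m_def by simp
  have "l1norm (p - a) \<le> l1norm (p - X \<epsilon> m ((\<sigma> ^^ m) \<omega>) *v e0) + l1norm (X \<epsilon> m ((\<sigma> ^^ m) \<omega>) *v e0 - a)"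
    by (rule l1norm_diff_triangle)
  then show "l1norm (plim X \<sigma> \<epsilon> \<omega> - axis (drn_map (X 0) n ((\<sigma> ^^ n) \<omega>) undefined) 1) \<le> real n * \<epsilon> + d"
    using b1 b2 unfolding p_def a_def by linarith
qed

end


lemma closed_simplex: "closed (simplex1 :: (real^'k::finite) set)"
  unfolding closed_sequential_limits using simplex_lim by blast

lemma l1norm_zero: "l1norm (v::real^'k::finite) \<le> 0 \<Longrightarrow> v = 0"
proof -
  assume "l1norm v \<le> 0"
  then have "norm v \<le> 0" using norm_le_l1norm[of v] by linarith
  then show "v = 0" by simp
qed

lemma at_right_bound:
  fixes f :: "real \<Rightarrow> real"
  assumes e1: "\<epsilon>1 > 0" and b: "\<And>\<epsilon>. 0 < \<epsilon> \<Longrightarrow> \<epsilon> < \<epsilon>1 \<Longrightarrow> f \<epsilon> \<le> C * \<epsilon>" and nn: "\<And>\<epsilon>. 0 \<le> f \<epsilon>"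
  shows "(f \<longlongrightarrow> 0) (at_right 0)"
proof (rule tendsto_sandwich[where f="\<lambda>_. 0" and h="\<lambda>\<epsilon>. C * \<epsilon>"])
  show "\<forall>\<^sub>F \<epsilon> in at_right 0. 0 \<le> f \<epsilon>" using nn by simp
  show "\<forall>\<^sub>F \<epsilon> in at_right 0. f \<epsilon> \<le> C * \<epsilon>"
    unfolding eventually_at_right_field using e1 b by blast
  show "((\<lambda>_. 0) \<longlongrightarrow> (0::real)) (at_right 0)" by simp
  have "((\<lambda>\<epsilon>. \<epsilon>) \<longlongrightarrow> (0::real)) (at_right 0)" by (rule tendsto_ident_at)
  then show "((\<lambda>\<epsilon>. C * \<epsilon>) \<longlongrightarrow> 0) (at_right 0)" by (rule tendsto_mult_right_zero)
qed

lemma funpow_meas: "f \<in> M \<rightarrow>\<^sub>M M \<Longrightarrow> (f ^^ n) \<in> M \<rightarrow>\<^sub>M M"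
proof (induction n)
  case 0 then show ?case by simp
next
  case (Suc n)
  then have 1: "f \<circ> (f ^^ n) \<in> M \<rightarrow>\<^sub>M M" using measurable_comp by blast
  have eq: "f ^^ Suc n = f \<circ> (f ^^ n)" by simp
  show ?case by (subst eq) (rule 1)
qed

lemma meas_seq:
  fixes X :: "'a \<Rightarrow> real^'k::finite^'k"
  assumes X: "\<And>i j. (\<lambda>\<omega>. X \<omega> $ i $ j) \<in> borel_measurable M" and g: "g \<in> M \<rightarrow>\<^sub>M M"
  shows "(\<lambda>\<omega>. X (g \<omega>) *v v) \<in> borel_measurable M"
proof (rule vec_measurable)
  fix i
  have c: "(\<lambda>\<omega>. X (g \<omega>) $ i $ j) \<in> borel_measurable M" for j
    using measurable_compose[OF g X[of i j]] by simp
  have "(\<lambda>\<omega>. \<Sum>j\<in>UNIV. X (g \<omega>) $ i $ j * v $ j) \<in> borel_measurable M"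
    using c by (intro borel_measurable_sum borel_measurable_times borel_measurable_const) auto
  then show "(\<lambda>\<omega>. (X (g \<omega>) *v v) $ i) \<in> borel_measurable M"
    by (simp add: matrix_vector_mult_def)
qed

lemma meas_plim:
  assumes X: "\<And>n i j. (\<lambda>\<omega>. X \<epsilon> n \<omega> $ i $ j) \<in> borel_measurable M" and s: "\<sigma> \<in> M \<rightarrow>\<^sub>M M"
  shows "plim X \<sigma> \<epsilon> \<in> borel_measurable M"
proof -
  define f where "f n \<omega> = X \<epsilon> n ((\<sigma> ^^ n) \<omega>) *v axis undefined 1" for n \<omega>
  have f: "f n \<in> borel_measurable M" for n
    unfolding f_def by (rule meas_seq[OF X funpow_meas[OF s]])
  have l: "(\<lambda>\<omega>. lim (\<lambda>n. f n \<omega>)) \<in> borel_measurable M" by (rule borel_measurable_lim_metric[OF f])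
  have c: "{\<omega>\<in>space M. Cauchy (\<lambda>n. f n \<omega>)} \<in> sets M" by (rule sets_Collect_Cauchy[OF f])
  have "(\<lambda>\<omega>. lim (\<lambda>n. f n \<omega>)) -` simplex1 \<inter> space M \<in> sets M"
    using measurable_sets[OF l borel_closed[OF closed_simplex]] .
  then have "{\<omega>\<in>space M. Cauchy (\<lambda>n. f n \<omega>) \<and> lim (\<lambda>n. f n \<omega>) \<in> simplex1} \<in> sets M"
  proof -
    have "{\<omega>\<in>space M. Cauchy (\<lambda>n. f n \<omega>) \<and> lim (\<lambda>n. f n \<omega>) \<in> simplex1} =
      {\<omega>\<in>space M. Cauchy (\<lambda>n. f n \<omega>)} \<inter> ((\<lambda>\<omega>. lim (\<lambda>n. f n \<omega>)) -` simplex1 \<inter> space M)" by blast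
    then show ?thesis using c \<open>(\<lambda>\<omega>. lim (\<lambda>n. f n \<omega>)) -` simplex1 \<inter> space M \<in> sets M\<close> by (simp add: sets.Int)
  qed
  then have "(\<lambda>\<omega>. if Cauchy (\<lambda>n. f n \<omega>) \<and> lim (\<lambda>n. f n \<omega>) \<in> simplex1 then lim (\<lambda>n. f n \<omega>) else axis undefined 1)
      \<in> borel_measurable M"
    by (rule measurable_If[OF l borel_measurable_const])
  then show ?thesis unfolding plim_def f_def[abs_def] by simp
qed


theorem theoremA:
  fixes M :: "'a::polish_space measure" and \<theta> :: "'a \<Rightarrow> 'a"
    and X :: "real \<Rightarrow> nat \<Rightarrow> 'a \<Rightarrow> real^'k::finite^'k"
  assumes "CARD('k) \<ge> 2"
    and "invertible_ergodic_mds M \<theta>"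
    and "markov_perturbation M \<theta> X"
    and "synchronized M \<theta> (X 0)"
  shows "\<exists>\<epsilon>1>0. \<exists>p :: real \<Rightarrow> 'a \<Rightarrow> real^'k.
     (\<forall>\<epsilon>. 0 \<le> \<epsilon> \<and> \<epsilon> < \<epsilon>1 \<longrightarrow>
        invariant_distribution M \<theta> (X \<epsilon>) (p \<epsilon>) \<and>
        (\<forall>q\<in>simplex1. AE \<omega> in M.
           (\<lambda>n. l1norm (X \<epsilon> n ((inv_into (space M) \<theta> ^^ n) \<omega>) *v q - p \<epsilon> \<omega>)) \<longlonglongrightarrow> 0) \<and>
        (\<forall>q\<in>simplex1. AE \<omega> in M.
           (\<lambda>n. l1norm (X \<epsilon> n \<omega> *v q - p \<epsilon> ((\<theta> ^^ n) \<omega>))) \<longlonglongrightarrow> 0)) \<and>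
     (\<exists>J :: 'a \<Rightarrow> 'k. J \<in> M \<rightarrow>\<^sub>M count_space UNIV \<and>
        (AE \<omega> in M. ((\<lambda>\<epsilon>. l1norm (p \<epsilon> \<omega> - axis (J \<omega>) 1)) \<longlongrightarrow> 0) (at_right 0) \<and>
                     p 0 \<omega> = axis (J \<omega>) 1) \<and>
        (uniformly_synchronized M \<theta> (X 0) \<longrightarrow>
           (\<exists>\<Omega>0\<in>sets M. measure M \<Omega>0 = 1 \<and>
              (\<forall>\<delta>>0. \<exists>\<eta>>0. \<forall>\<epsilon>. 0 < \<epsilon> \<and> \<epsilon> < \<eta> \<longrightarrow>
                 (\<forall>\<omega>\<in>\<Omega>0. l1norm (p \<epsilon> \<omega> - axis (J \<omega>) 1) < \<delta>)))))"
proof -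
  obtain \<sigma> where \<sigma>: "\<sigma> = inv_into (space M) \<theta>" by blast
  have sps: "standard_prob_space M" and bij: "bij_betw \<theta> (space M) (space M)"
    and tm: "\<theta> \<in> M \<rightarrow>\<^sub>M M" and sm: "\<sigma> \<in> M \<rightarrow>\<^sub>M M" and dt: "distr M M \<theta> = M"
    and erg: "\<forall>A\<in>sets M. \<theta> -` A \<inter> space M = A \<longrightarrow> measure M A = 0 \<or> measure M A = 1"
    using assms(2) unfolding invertible_ergodic_mds_def \<sigma> by auto
  have P: "prob_space M" using sps unfolding standard_prob_space_def by blast
  interpret prob_space M by (rule P)
  have ds: "distr M M \<sigma> = M" unfolding \<sigma> by (rule inv_mp[OF bij tm sm[unfolded \<sigma>] dt])
  have ergs: "\<forall>A\<in>sets M. \<sigma> -` A \<inter> space M = A \<longrightarrow> measure M A = 0 \<or> measure M A = 1"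
    unfolding \<sigma> by (rule inv_erg[OF bij erg])
  have inj: "inj_on \<theta> (space M)" using bij by (rule bij_betw_imp_inj_on)
  have SH: "shifts (space M) \<theta> \<sigma>"
  proof (unfold shifts_def, intro allI impI conjI)
    fix x assume x: "x \<in> space M"
    show "\<theta> x \<in> space M" using measurable_space[OF tm x] .
    show "\<sigma> x \<in> space M" using measurable_space[OF sm x] .
    show "\<theta> (\<sigma> x) = x" unfolding \<sigma> using bij_betw_inv_into_right[OF bij x] .
    show "\<sigma> (\<theta> x) = x" unfolding \<sigma> using inv_into_f_f[OF inj x] .
  qed
  have DRN0: "DRN_cocycle M \<theta> (X 0)"
    and MP: "\<And>\<epsilon>. 0 \<le> \<epsilon> \<Longrightarrow> MRN_cocycle M \<theta> (X \<epsilon>) \<and> (AE \<omega> in M. opnorm1 (X \<epsilon> 1 \<omega> - X 0 1 \<omega>) \<le> \<epsilon>)"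
    using assms(3) unfolding markov_perturbation_def by auto
  obtain N where Nm: "N \<in> M \<rightarrow>\<^sub>M count_space UNIV"
    and Nsy: "AE \<omega> in M. \<forall>i j. \<forall>n\<ge>N \<omega>. drn_map (X 0) n \<omega> i = drn_map (X 0) n \<omega> j"
    using assms(4) unfolding synchronized_def by blast
  obtain L where LA: "{x\<in>space M. N x \<le> L} \<in> sets M" "measure M {x\<in>space M. N x \<le> L} > 0"
    using pos_level[OF P Nm] by blast
  have fv: "AE \<omega> in M. \<forall>m. \<exists>t\<ge>m. (\<theta> ^^ t) \<omega> \<in> {x\<in>space M. N x \<le> L}"
    by (rule recurrence[OF P tm dt erg LA])
  have bv: "AE \<omega> in M. \<forall>m. \<exists>t\<ge>m. (\<sigma> ^^ t) \<omega> \<in> {x\<in>space M. N x \<le> L}"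
    by (rule recurrence[OF P sm ds ergs LA])
  have gp: "AE x in M. goodpt X \<theta> N \<epsilon> x" if "0 \<le> \<epsilon>" for \<epsilon>
  proof -
    from MP[OF that] have m: "MRN_cocycle M \<theta> (X \<epsilon>)" and o: "AE \<omega> in M. opnorm1 (X \<epsilon> 1 \<omega> - X 0 1 \<omega>) \<le> \<epsilon>"
      by auto
    from m have m1: "AE \<omega> in M. \<forall>n. column_stochastic (X \<epsilon> n \<omega>)"
      and m2: "AE \<omega> in M. X \<epsilon> 0 \<omega> = mat 1"
      and m3: "AE \<omega> in M. \<forall>m n. X \<epsilon> (m + n) \<omega> = X \<epsilon> m ((\<theta> ^^ n) \<omega>) ** X \<epsilon> n \<omega>"
      unfolding MRN_cocycle_def by auto
    from DRN0 have d1: "AE \<omega> in M. \<forall>n. column_stochastic (X 0 n \<omega>)"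
      and d2: "AE \<omega> in M. X 0 0 \<omega> = mat 1"
      and d3: "AE \<omega> in M. \<forall>m n. X 0 (m + n) \<omega> = X 0 m ((\<theta> ^^ n) \<omega>) ** X 0 n \<omega>"
      and d4: "AE \<omega> in M. \<forall>n i j. X 0 n \<omega> $ i $ j \<in> {0, 1}"
      unfolding DRN_cocycle_def MRN_cocycle_def by auto
    show ?thesis using m1 m2 m3 o d1 d2 d3 d4 Nsy unfolding goodpt_def
      by eventually_elim (intro conjI)
  qed
  have gw: "AE \<omega> in M. goodw (space M) \<theta> \<sigma> X N \<epsilon> L \<omega>" if "0 \<le> \<epsilon>" for \<epsilon>
  proof -
    have a1: "AE \<omega> in M. \<forall>n. goodpt X \<theta> N \<epsilon> ((\<theta> ^^ n) \<omega>)" by (rule AE_shift_pow[OF tm dt gp[OF that]])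
    have a2: "AE \<omega> in M. \<forall>n. goodpt X \<theta> N \<epsilon> ((\<sigma> ^^ n) \<omega>)" by (rule AE_shift_pow[OF sm ds gp[OF that]])
    show ?thesis using a1 a2 fv bv AE_space unfolding goodw_def
      by eventually_elim blast
  qed
  define NS where "NS \<epsilon> = (SOME S. S \<in> sets M \<and> emeasure M S = 0 \<and>
      {\<omega>\<in>space M. \<not> goodw (space M) \<theta> \<sigma> X N \<epsilon> L \<omega>} \<subseteq> S)" for \<epsilon>
  have NS: "NS \<epsilon> \<in> sets M \<and> emeasure M (NS \<epsilon>) = 0 \<and>
      {\<omega>\<in>space M. \<not> goodw (space M) \<theta> \<sigma> X N \<epsilon> L \<omega>} \<subseteq> NS \<epsilon>" if "0 \<le> \<epsilon>" for \<epsilon>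
  proof -
    from gw[OF that] obtain S where "{\<omega>\<in>space M. \<not> goodw (space M) \<theta> \<sigma> X N \<epsilon> L \<omega>} \<subseteq> S"
      "emeasure M S = 0" "S \<in> sets M" by (rule AE_E)
    then have "\<exists>S. S \<in> sets M \<and> emeasure M S = 0 \<and> {\<omega>\<in>space M. \<not> goodw (space M) \<theta> \<sigma> X N \<epsilon> L \<omega>} \<subseteq> S"
      by blast
    then show ?thesis unfolding NS_def by (rule someI_ex)
  qed
  have goodNS: "goodw (space M) \<theta> \<sigma> X N \<epsilon> L \<omega>" if "0 \<le> \<epsilon>" "\<omega> \<in> space M" "\<omega> \<notin> NS \<epsilon>" for \<epsilon> \<omega>
    using NS[OF that(1)] that(2,3) by blast
  have NSnull: "NS \<epsilon> \<in> null_sets M" if "0 \<le> \<epsilon>" for \<epsilon>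
    using NS[OF that] by (simp add: null_setsI)
  define J where "J \<omega> = (if \<exists>i. plim X \<sigma> 0 \<omega> = axis i 1 then (THE i. plim X \<sigma> 0 \<omega> = axis i 1) else undefined)" for \<omega>
  define p where "p \<epsilon> \<omega> = (if \<omega> \<in> NS \<epsilon> then axis (J \<omega>) 1 else plim X \<sigma> \<epsilon> \<omega>)" for \<epsilon> \<omega>
  define \<epsilon>1 where "\<epsilon>1 = 1 / (2 * (real L + 1))"
  have e1: "\<epsilon>1 > 0" unfolding \<epsilon>1_def by simp
  have FX: "fixed (space M) \<theta> \<sigma> \<epsilon> L" if "0 \<le> \<epsilon>" "\<epsilon> < \<epsilon>1" for \<epsilon>
  proof -
    have "\<epsilon> * (2 * (real L + 1)) < 1" using that(2) unfolding \<epsilon>1_def by (simp add: pos_less_divide_eq)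
    then have "real L * \<epsilon> \<le> 1/2" using that(1) by (simp add: algebra_simps)
    then show ?thesis using SH that(1) unfolding fixed_def fixed_axioms_def by blast
  qed
  have plimm: "plim X \<sigma> \<epsilon> \<in> borel_measurable M" if "0 \<le> \<epsilon>" for \<epsilon>
    using MP[OF that] sm unfolding MRN_cocycle_def by (intro meas_plim) auto
  have Jpre: "J -` {a} \<inter> space M = (plim X \<sigma> 0 -` {axis a 1} \<inter> space M) \<union>
      (if a = undefined then space M - (plim X \<sigma> 0 -` range (\<lambda>i. axis i 1) \<inter> space M) else {})" for a
  proof (intro set_eqI)
    fix \<omega>
    show "\<omega> \<in> J -` {a} \<inter> space M \<longleftrightarrow> \<omega> \<in> (plim X \<sigma> 0 -` {axis a 1} \<inter> space M) \<union>
      (if a = undefined then space M - (plim X \<sigma> 0 -` range (\<lambda>i. axis i 1) \<inter> space M) else {})"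
    proof (cases "\<exists>i. plim X \<sigma> 0 \<omega> = axis i 1")
      case True
      then obtain i where i: "plim X \<sigma> 0 \<omega> = axis i 1" by blast
      have "J \<omega> = i" unfolding J_def using i by (auto simp: axis_eq_axis)
      then show ?thesis using i by (auto simp: axis_eq_axis)
    next
      case False
      then have "J \<omega> = undefined" unfolding J_def by simp
      then show ?thesis using False by auto
    qed
  qed
  have Jm: "J \<in> M \<rightarrow>\<^sub>M count_space UNIV"
  proof (subst measurable_count_space_eq2[OF finite_class.finite_UNIV], intro conjI ballI)
    show "J \<in> space M \<rightarrow> UNIV" by simp
    fix a :: 'k
    have s1: "plim X \<sigma> 0 -` {axis a 1} \<inter> space M \<in> sets M"
      by (rule measurable_sets[OF plimm[of 0] borel_closed[OF closed_singleton]]) simp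
    have s2: "plim X \<sigma> 0 -` range (\<lambda>i. axis i 1) \<inter> space M \<in> sets M"
      by (rule measurable_sets[OF plimm[of 0] borel_closed[OF finite_imp_closed]]) simp_all
    show "J -` {a} \<inter> space M \<in> sets M" unfolding Jpre using s1 s2 by auto
  qed
  have AJm: "(\<lambda>\<omega>. axis (J \<omega>) 1 :: real^'k) \<in> borel_measurable M"
    by (rule measurable_compose[OF Jm]) simp
  have pm: "p \<epsilon> \<in> borel_measurable M" if "0 \<le> \<epsilon>" for \<epsilon>
  proof -
    have "{\<omega>\<in>space M. \<omega> \<in> NS \<epsilon>} = NS \<epsilon> \<inter> space M" by blast
    then have "{\<omega>\<in>space M. \<omega> \<in> NS \<epsilon>} \<in> sets M" using NS[OF that] by auto
    then show ?thesis unfolding p_def[abs_def] by (rule measurable_If[OF AJm plimm[OF that]])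
  qed
  have part1: "invariant_distribution M \<theta> (X \<epsilon>) (p \<epsilon>) \<and>
        (\<forall>q\<in>simplex1. AE \<omega> in M.
           (\<lambda>n. l1norm (X \<epsilon> n ((inv_into (space M) \<theta> ^^ n) \<omega>) *v q - p \<epsilon> \<omega>)) \<longlonglongrightarrow> 0) \<and>
        (\<forall>q\<in>simplex1. AE \<omega> in M.
           (\<lambda>n. l1norm (X \<epsilon> n \<omega> *v q - p \<epsilon> ((\<theta> ^^ n) \<omega>))) \<longlonglongrightarrow> 0)"
    if e: "0 \<le> \<epsilon>" "\<epsilon> < \<epsilon>1" for \<epsilon>
  proof -
    interpret fx: fixed "space M" \<theta> \<sigma> X N \<epsilon> L by (rule FX[OF e])
    have a0: "AE \<omega> in M. \<omega> \<notin> NS \<epsilon>" by (rule AE_not_in[OF NSnull[OF e(1)]])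
    have an: "AE \<omega> in M. \<forall>n. (\<theta> ^^ n) \<omega> \<notin> NS \<epsilon>" by (rule AE_shift_pow[OF tm dt a0])
    have inv: "AE \<omega> in M. \<forall>n. X \<epsilon> n \<omega> *v p \<epsilon> \<omega> = p \<epsilon> ((\<theta> ^^ n) \<omega>)"
      using a0 an AE_space
    proof eventually_elim
      case (elim \<omega>)
      then have g: "goodw (space M) \<theta> \<sigma> X N \<epsilon> L \<omega>" using goodNS[OF e(1)] by blast
      show ?case using fx.plim_inv[OF g] elim unfolding p_def by simp
    qed
    have sp: "\<forall>\<omega>\<in>space M. p \<epsilon> \<omega> \<in> simplex1" unfolding p_def by (simp add: axis_simplex plim_simplex)
    have pull: "AE \<omega> in M. (\<lambda>n. l1norm (X \<epsilon> n ((inv_into (space M) \<theta> ^^ n) \<omega>) *v q - p \<epsilon> \<omega>)) \<longlonglongrightarrow> 0"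
      if q: "q \<in> simplex1" for q
      using a0 AE_space
    proof eventually_elim
      case (elim \<omega>)
      then have g: "goodw (space M) \<theta> \<sigma> X N \<epsilon> L \<omega>" using goodNS[OF e(1)] by blast
      show ?case using fx.plim_pull[OF g q] elim unfolding p_def \<sigma> by simp
    qed
    have fwd: "AE \<omega> in M. (\<lambda>n. l1norm (X \<epsilon> n \<omega> *v q - p \<epsilon> ((\<theta> ^^ n) \<omega>))) \<longlonglongrightarrow> 0"
      if q: "q \<in> simplex1" for q
      using a0 an AE_space
    proof eventually_elim
      case (elim \<omega>)
      then have g: "goodw (space M) \<theta> \<sigma> X N \<epsilon> L \<omega>" using goodNS[OF e(1)] by blast
      show ?case using fx.plim_fwd[OF g q] elim unfolding p_def by simp
    qed
    show ?thesis using inv sp pull fwd pm[OF e(1)] unfolding invariant_distribution_def by blast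
  qed
  have key: "J \<omega> = drn_map (X 0) n ((\<sigma> ^^ n) \<omega>) undefined \<and>
      (\<forall>\<epsilon>. 0 \<le> \<epsilon> \<and> \<epsilon> < \<epsilon>1 \<longrightarrow> l1norm (p \<epsilon> \<omega> - axis (J \<omega>) 1) \<le> real n * \<epsilon>)"
    if g0: "goodw (space M) \<theta> \<sigma> X N 0 L \<omega>"
      and sy: "\<forall>i j. drn_map (X 0) n ((\<sigma> ^^ n) \<omega>) i = drn_map (X 0) n ((\<sigma> ^^ n) \<omega>) j" for \<omega> n
  proof -
    define c where "c = drn_map (X 0) n ((\<sigma> ^^ n) \<omega>) undefined"
    have wO: "\<omega> \<in> space M" using g0 unfolding goodw_def by blast
    interpret fx0: fixed "space M" \<theta> \<sigma> X N 0 L by (rule FX[OF order_refl e1])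
    have "l1norm (plim X \<sigma> 0 \<omega> - axis c 1) \<le> real n * 0"
      unfolding c_def by (rule fx0.plim_bound[OF g0 sy])
    then have pc: "plim X \<sigma> 0 \<omega> = axis c 1" using l1norm_zero by fastforce
    have Jc: "J \<omega> = c" unfolding J_def using pc by (auto simp: axis_eq_axis)
    have "l1norm (p \<epsilon> \<omega> - axis (J \<omega>) 1) \<le> real n * \<epsilon>" if e: "0 \<le> \<epsilon>" "\<epsilon> < \<epsilon>1" for \<epsilon>
    proof (cases "\<omega> \<in> NS \<epsilon>")
      case True
      then show ?thesis using e unfolding p_def by (simp add: l1norm_def)
    next
      case False
      interpret fx: fixed "space M" \<theta> \<sigma> X N \<epsilon> L by (rule FX[OF e])
      have g: "goodw (space M) \<theta> \<sigma> X N \<epsilon> L \<omega>" by (rule goodNS[OF e(1) wO False])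
      show ?thesis using fx.plim_bound[OF g sy] False Jc unfolding p_def c_def by simp
    qed
    then show ?thesis using Jc unfolding c_def by blast
  qed
  have ae2: "AE \<omega> in M. ((\<lambda>\<epsilon>. l1norm (p \<epsilon> \<omega> - axis (J \<omega>) 1)) \<longlongrightarrow> 0) (at_right 0) \<and>
                     p 0 \<omega> = axis (J \<omega>) 1"
    using gw[OF order_refl]
  proof eventually_elim
    case (elim \<omega>)
    then obtain t where t: "t \<ge> L" "N ((\<sigma> ^^ t) \<omega>) \<le> L" unfolding goodw_def by blast
    have "goodpt X \<theta> N 0 ((\<sigma> ^^ t) \<omega>)" using elim unfolding goodw_def by blast
    then have sy: "\<forall>i j. drn_map (X 0) t ((\<sigma> ^^ t) \<omega>) i = drn_map (X 0) t ((\<sigma> ^^ t) \<omega>) j"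
      using t unfolding goodpt_def by auto
    have b: "\<forall>\<epsilon>. 0 \<le> \<epsilon> \<and> \<epsilon> < \<epsilon>1 \<longrightarrow> l1norm (p \<epsilon> \<omega> - axis (J \<omega>) 1) \<le> real t * \<epsilon>"
      using key[OF elim sy] by blast
    have bb: "\<And>\<epsilon>. 0 < \<epsilon> \<Longrightarrow> \<epsilon> < \<epsilon>1 \<Longrightarrow> l1norm (p \<epsilon> \<omega> - axis (J \<omega>) 1) \<le> real t * \<epsilon>"
      using b by simp
    have "((\<lambda>\<epsilon>. l1norm (p \<epsilon> \<omega> - axis (J \<omega>) 1)) \<longlongrightarrow> 0) (at_right 0)"
      by (rule at_right_bound[OF e1 bb l1norm_nonneg])
    moreover have "l1norm (p 0 \<omega> - axis (J \<omega>) 1) \<le> 0" using b e1 by auto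
    then have "p 0 \<omega> = axis (J \<omega>) 1" using l1norm_zero by fastforce
    ultimately show ?case by blast
  qed
  have unif: "\<exists>\<Omega>0\<in>sets M. measure M \<Omega>0 = 1 \<and>
              (\<forall>\<delta>>0. \<exists>\<eta>>0. \<forall>\<epsilon>. 0 < \<epsilon> \<and> \<epsilon> < \<eta> \<longrightarrow>
                 (\<forall>\<omega>\<in>\<Omega>0. l1norm (p \<epsilon> \<omega> - axis (J \<omega>) 1) < \<delta>))"
    if US: "uniformly_synchronized M \<theta> (X 0)"
  proof -
    obtain N' c0 where c0: "AE \<omega> in M. N' \<omega> = c0"
      and sy': "AE \<omega> in M. \<forall>i j. \<forall>n\<ge>N' \<omega>. drn_map (X 0) n \<omega> i = drn_map (X 0) n \<omega> j"
      using US unfolding uniformly_synchronized_def by blast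
    have "AE \<omega> in M. N' \<omega> = c0 \<and> (\<forall>i j. \<forall>n\<ge>N' \<omega>. drn_map (X 0) n \<omega> i = drn_map (X 0) n \<omega> j)"
      using c0 sy' by eventually_elim blast
    then have sh: "AE \<omega> in M. \<forall>m. N' ((\<sigma> ^^ m) \<omega>) = c0 \<and> (\<forall>i j. \<forall>n\<ge>N' ((\<sigma> ^^ m) \<omega>).
        drn_map (X 0) n ((\<sigma> ^^ m) \<omega>) i = drn_map (X 0) n ((\<sigma> ^^ m) \<omega>) j)"
      by (rule AE_shift_pow[OF sm ds])
    have "AE \<omega> in M. goodw (space M) \<theta> \<sigma> X N 0 L \<omega> \<and>
        (\<forall>i j. drn_map (X 0) c0 ((\<sigma> ^^ c0) \<omega>) i = drn_map (X 0) c0 ((\<sigma> ^^ c0) \<omega>) j)"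
      using gw[OF order_refl] sh
    proof eventually_elim
      case (elim \<omega>)
      then show ?case by (metis order_refl)
    qed
    then obtain U where U: "{\<omega>\<in>space M. \<not> (goodw (space M) \<theta> \<sigma> X N 0 L \<omega> \<and>
        (\<forall>i j. drn_map (X 0) c0 ((\<sigma> ^^ c0) \<omega>) i = drn_map (X 0) c0 ((\<sigma> ^^ c0) \<omega>) j))} \<subseteq> U"
      "emeasure M U = 0" "U \<in> sets M" by (rule AE_E)
    define \<Omega>0 where "\<Omega>0 = space M - U"
    have O0: "\<Omega>0 \<in> sets M" unfolding \<Omega>0_def using U(3) by auto
    have "prob U = 0" using U(2) by (simp add: emeasure_eq_measure)
    then have m1: "measure M \<Omega>0 = 1" unfolding \<Omega>0_def using prob_compl[OF U(3)] by simp
    have bnd: "l1norm (p \<epsilon> \<omega> - axis (J \<omega>) 1) \<le> real c0 * \<epsilon>" if "\<omega> \<in> \<Omega>0" "0 \<le> \<epsilon>" "\<epsilon> < \<epsilon>1" for \<omega> \<epsilon>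
    proof -
      have "goodw (space M) \<theta> \<sigma> X N 0 L \<omega>"
        "\<forall>i j. drn_map (X 0) c0 ((\<sigma> ^^ c0) \<omega>) i = drn_map (X 0) c0 ((\<sigma> ^^ c0) \<omega>) j"
        using that(1) U(1) unfolding \<Omega>0_def by auto
      then show ?thesis using key that(2,3) by blast
    qed
    have "\<exists>\<eta>>0. \<forall>\<epsilon>. 0 < \<epsilon> \<and> \<epsilon> < \<eta> \<longrightarrow> (\<forall>\<omega>\<in>\<Omega>0. l1norm (p \<epsilon> \<omega> - axis (J \<omega>) 1) < \<delta>)"
      if d: "\<delta> > 0" for \<delta>
    proof (intro exI[of _ "min \<epsilon>1 (\<delta> / (real c0 + 1))"] conjI allI impI ballI)
      show "0 < min \<epsilon>1 (\<delta> / (real c0 + 1))" using e1 d by simp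
      fix \<epsilon> \<omega> assume \<epsilon>: "0 < \<epsilon> \<and> \<epsilon> < min \<epsilon>1 (\<delta> / (real c0 + 1))" and \<omega>: "\<omega> \<in> \<Omega>0"
      have "l1norm (p \<epsilon> \<omega> - axis (J \<omega>) 1) \<le> real c0 * \<epsilon>" using bnd[OF \<omega>] \<epsilon> by simp
      also have "\<dots> \<le> (real c0 + 1) * \<epsilon>" using \<epsilon> by (simp add: algebra_simps)
      also have "\<dots> < (real c0 + 1) * (\<delta> / (real c0 + 1))"
        using \<epsilon> by (intro mult_strict_left_mono) auto
      also have "\<dots> = \<delta>" by simp
      finally show "l1norm (p \<epsilon> \<omega> - axis (J \<omega>) 1) < \<delta>" .
    qed
    then show ?thesis using O0 m1 by blast
  qed
  show ?thesis
    using e1 part1 Jm ae2 unif by blast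
qed


end
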